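(* Fix $J+1\le k\le M$, nonnegative reals $a_{J+1},\dots,a_{M+L}$, and the test channels $q_\kappa$ (on finite alphabets) for all $\kappa\in\{J+1,\dots,M\}\setminus\{k\}$. Consider the minimization of $$\omega(q_k)=\sum_{i=J+1}^M a_iR^0_i+\sum_{l=1}^L a_{M+l}D^0_l$$ over all finite alphabets $\mathcal Z_k$ and all test channels $q_k(z_k|x_k)$ (equivalently, over all pairs $(p'_k,q'_k)$ with $p'_k$ a pmf on a finite $\mathcal Z_k$ and $q'_k(\cdot|z_k)\in\Delta_{\mathcal X_k}$ satisfying $p_k(x_k)=\sum_{z_k}p'_k(z_k)q'_k(x_k|z_k)$ for all $x_k$). Then this minimum is attained, and it is attained by some test channel whose output alphabet satisfies $|\mathcal Z_k|\le|\mathcal X_k|$.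
   Context: Let $M\ge1$, $0\le J\le M$, $L\ge1$. Let $X_1,\dots,X_M,S,V$ be random variables on finite alphabets with joint pmf $p(x_1,\dots,x_M,s,v)$; for $1\le l\le L$, $\hat{\mathcal V}_l$ is a finite reconstruction alphabet and $d_l:\mathcal V\times\hat{\mathcal V}_l\to[0,d_{l,\max}]$ a bounded distortion measure. For $J+1\le \kappa\le M$, $Z_\kappa$ takes values in a finite alphabet $\mathcal Z_\kappa$ and is generated by a test channel $q_\kappa(z_\kappa|x_\kappa)$, so that $(X_1,\dots,X_M,S,V,Z_{J+1},\dots,Z_M)$ has joint pmf $p(x_1,\dots,x_M,s,v)\prod_{\kappa=J+1}^M q_\kappa(z_\kappa|x_\kappa)$. For $A$ a set of indices, $X_A=(X_j)_{j\in A}$, $Z_A=(Z_j)_{j\in A}$. Define $R^0_i=I(X_i;Z_i\mid X_{\{1,\dots,J\}},Z_{\{J+1,\dots,i-1\}},S)$ for $J+1\le i\le M$, and $D^0_l=\min_{\psi_l}\mathbb E\,d_l(V,\psi_l(X_{\{1,\dots,J\}},Z_{\{J+1,\dots,M\}},S))$, the minimum over all maps $\psi_l:\mathcal X_1\times\dots\times\mathcal X_J\times\mathcal Z_{J+1}\times\dots\times\mathcal Z_M\times\mathcal S\to\hat{\mathcal V}_l$. $p_k$ is the marginal pmf of $X_k$, $p'_k$ the marginal pmf of $Z_k$, and $q'_k(x_k|z_k)$ the conditional pmf of $X_k$ given $Z_k=z_k$. $\Delta_{\mathcal X_k}$ is the probability simplex of pmfs on $\mathcal X_k$. *)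

theory Defs
  imports Complex_Main "HOL-Library.FuncSet"
begin

definition marg :: "'o set \<Rightarrow> ('o \<Rightarrow> real) \<Rightarrow> ('o \<Rightarrow> 'b) \<Rightarrow> 'b \<Rightarrow> real" where
  "marg Om P f b = sum P {w \<in> Om. f w = b}"

definition cond_mutual_info ::
  "'o set \<Rightarrow> ('o \<Rightarrow> real) \<Rightarrow> ('o \<Rightarrow> 'b) \<Rightarrow> ('o \<Rightarrow> 'c) \<Rightarrow> ('o \<Rightarrow> 'e) \<Rightarrow> real" where
  "cond_mutual_info Om P A B C =
     (\<Sum>w\<in>Om. if P w = 0 then 0 else
        P w * log 2 ((marg Om P (\<lambda>u. (A u, B u, C u)) (A w, B w, C w) * marg Om P C (C w)) /
                     (marg Om P (\<lambda>u. (A u, C u)) (A w, C w) * marg Om P (\<lambda>u. (B u, C u)) (B w, C w))))"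

definition is_channel :: "'a set \<Rightarrow> nat \<Rightarrow> ('a \<Rightarrow> nat \<Rightarrow> real) \<Rightarrow> bool" where
  "is_channel A N q \<longleftrightarrow> (\<forall>x\<in>A. (\<forall>z<N. 0 \<le> q x z) \<and> (\<Sum>z<N. q x z) = 1)"

definition src_space :: "nat \<Rightarrow> (nat \<Rightarrow> 'a set) \<Rightarrow> 's set \<Rightarrow> 'v set \<Rightarrow> ((nat \<Rightarrow> 'a) \<times> 's \<times> 'v) set" where
  "src_space M AX AS AV = PiE {1..M} AX \<times> AS \<times> AV"

definition joint_space :: "nat \<Rightarrow> nat \<Rightarrow> (nat \<Rightarrow> 'a set) \<Rightarrow> 's set \<Rightarrow> 'v set \<Rightarrow> (nat \<Rightarrow> nat)
    \<Rightarrow> (((nat \<Rightarrow> 'a) \<times> 's \<times> 'v) \<times> (nat \<Rightarrow> nat)) set" where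
  "joint_space M J AX AS AV n = src_space M AX AS AV \<times> PiE {J+1..M} (\<lambda>\<kappa>. {0..<n \<kappa>})"

definition joint_pmf :: "nat \<Rightarrow> nat \<Rightarrow> ((nat \<Rightarrow> 'a) \<times> 's \<times> 'v \<Rightarrow> real) \<Rightarrow> (nat \<Rightarrow> 'a \<Rightarrow> nat \<Rightarrow> real)
    \<Rightarrow> ((nat \<Rightarrow> 'a) \<times> 's \<times> 'v) \<times> (nat \<Rightarrow> nat) \<Rightarrow> real" where
  "joint_pmf M J p q = (\<lambda>((x, s, v), z). p (x, s, v) * (\<Prod>\<kappa>\<in>{J+1..M}. q \<kappa> (x \<kappa>) (z \<kappa>)))"

definition rate0 :: "nat \<Rightarrow> nat \<Rightarrow> (nat \<Rightarrow> 'a set) \<Rightarrow> 's set \<Rightarrow> 'v set \<Rightarrow> ((nat \<Rightarrow> 'a) \<times> 's \<times> 'v \<Rightarrow> real)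
    \<Rightarrow> (nat \<Rightarrow> nat) \<Rightarrow> (nat \<Rightarrow> 'a \<Rightarrow> nat \<Rightarrow> real) \<Rightarrow> nat \<Rightarrow> real" where
  "rate0 M J AX AS AV p n q i =
     cond_mutual_info (joint_space M J AX AS AV n) (joint_pmf M J p q)
       (\<lambda>((x, s, v), z). x i)
       (\<lambda>((x, s, v), z). z i)
       (\<lambda>((x, s, v), z). (restrict x {1..J}, restrict z {J+1..<i}, s))"

definition dist0 :: "nat \<Rightarrow> nat \<Rightarrow> (nat \<Rightarrow> 'a set) \<Rightarrow> 's set \<Rightarrow> 'v set \<Rightarrow> ((nat \<Rightarrow> 'a) \<times> 's \<times> 'v \<Rightarrow> real)
    \<Rightarrow> (nat \<Rightarrow> nat) \<Rightarrow> (nat \<Rightarrow> 'a \<Rightarrow> nat \<Rightarrow> real) \<Rightarrow> (nat \<Rightarrow> 'r set) \<Rightarrow> (nat \<Rightarrow> 'v \<Rightarrow> 'r \<Rightarrow> real)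
    \<Rightarrow> nat \<Rightarrow> real" where
  "dist0 M J AX AS AV p n q AR d l =
     Inf ((\<lambda>\<psi> :: (nat \<Rightarrow> 'a) \<times> (nat \<Rightarrow> nat) \<times> 's \<Rightarrow> 'r.
            \<Sum>w\<in>joint_space M J AX AS AV n.
              joint_pmf M J p q w *
              (case w of ((x, s, v), z) \<Rightarrow> d l v (\<psi> (restrict x {1..J}, restrict z {J+1..M}, s))))
          ` {\<psi>. \<forall>y. \<psi> y \<in> AR l})"

definition objective :: "nat \<Rightarrow> nat \<Rightarrow> nat \<Rightarrow> (nat \<Rightarrow> 'a set) \<Rightarrow> 's set \<Rightarrow> 'v set
    \<Rightarrow> ((nat \<Rightarrow> 'a) \<times> 's \<times> 'v \<Rightarrow> real) \<Rightarrow> (nat \<Rightarrow> 'r set) \<Rightarrow> (nat \<Rightarrow> 'v \<Rightarrow> 'r \<Rightarrow> real)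
    \<Rightarrow> (nat \<Rightarrow> real) \<Rightarrow> (nat \<Rightarrow> nat) \<Rightarrow> (nat \<Rightarrow> 'a \<Rightarrow> nat \<Rightarrow> real) \<Rightarrow> real" where
  "objective M J L AX AS AV p AR d a n q =
     (\<Sum>i=J+1..M. a i * rate0 M J AX AS AV p n q i) +
     (\<Sum>l=1..L. a (M + l) * dist0 M J AX AS AV p n q AR d l)"

end

theory Submission
  imports Defs "HOL-Analysis.Analysis" "HOL-Real_Asymp.Real_Asymp"
begin


lemma xlnx_cont: "continuous_on {0..} (\<lambda>q::real. q * ln q)"
proof -
  have "continuous (at q within {0..}) (\<lambda>q::real. q * ln q)" if "q \<ge> 0" for q
  proof (cases "q = 0")
    case True
    have "((\<lambda>x::real. x * ln x) \<longlongrightarrow> 0) (at_right 0)" by real_asymp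
    then show ?thesis using True by (simp add: continuous_within at_within_Ici_at_right)
  next
    case False
    then have pos: "q > 0" using that by simp
    show ?thesis by (rule continuous_at_imp_continuous_at_within) (use pos in \<open>auto intro!: continuous_intros\<close>)
  qed
  then show ?thesis by (simp add: continuous_on_eq_continuous_within)
qed

lemma plnq_cont2: "continuous_on {z::real\<times>real. 0 \<le> fst z \<and> fst z \<le> snd z} (\<lambda>z. fst z * ln (snd z))"
proof -
  let ?D = "{z::real\<times>real. 0 \<le> fst z \<and> fst z \<le> snd z}"
  have "continuous (at z within ?D) (\<lambda>z. fst z * ln (snd z))" if "z \<in> ?D" for z
  proof (cases "snd z = 0")
    case False
    then have pos: "snd z > 0" using that by auto
    show ?thesis by (rule continuous_at_imp_continuous_at_within) (use pos in \<open>auto intro!: continuous_intros\<close>)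
  next
    case True
    then have z0: "z = (0,0)" using that by (cases z) auto
    have c0: "continuous_on ?D (\<lambda>z. snd z * ln (snd z))"
      by (rule continuous_on_compose2[OF xlnx_cont, where f=snd]) (auto intro: continuous_intros)
    have c1: "continuous_on ?D (\<lambda>z. \<bar>snd z * ln (snd z)\<bar>)"
      by (rule continuous_on_rabs[OF c0])
    have "continuous (at z within ?D) (\<lambda>z. \<bar>snd z * ln (snd z)\<bar>)"
      using c1 that continuous_on_eq_continuous_within by blast
    then have "((\<lambda>z. \<bar>snd z * ln (snd z)\<bar>) \<longlongrightarrow> \<bar>snd z * ln (snd z)\<bar>) (at z within ?D)"
      by (simp add: continuous_within)
    then have lim0: "((\<lambda>z. \<bar>snd z * ln (snd z)\<bar>) \<longlongrightarrow> 0) (at z within ?D)" using True by simp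
    have ev1: "eventually (\<lambda>w. snd w < 1) (at z within ?D)"
    proof -
      have "((\<lambda>w. snd w) \<longlongrightarrow> snd z) (at z within ?D)"
        by (intro tendsto_intros)
      then have "(snd \<longlongrightarrow> 0) (at z within ?D)" using True by (simp add: o_def)
      then show ?thesis using order_tendstoD(2)[of snd 0 "at z within ?D" 1] by auto
    qed
    have inD: "eventually (\<lambda>w. w \<in> ?D) (at z within ?D)"
      by (simp add: eventually_at_filter)
    have ev2: "eventually (\<lambda>w. norm (fst w * ln (snd w)) \<le> \<bar>snd w * ln (snd w)\<bar>) (at z within ?D)"
    proof (rule eventually_mono[OF eventually_conj[OF ev1 inD]])
      fix w assume "snd w < 1 \<and> w \<in> ?D"
      then have w: "snd w < 1" "0 \<le> fst w" "fst w \<le> snd w" by auto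
      show "norm (fst w * ln (snd w)) \<le> \<bar>snd w * ln (snd w)\<bar>"
      proof (cases "fst w = 0")
        case True then show ?thesis by simp
      next
        case False
        then have "snd w > 0" using w by auto
        then have "ln (snd w) \<le> 0" using w by simp
        then have "snd w * ln (snd w) \<le> fst w * ln (snd w)" using w by (intro mult_right_mono_neg) auto
        moreover have "fst w * ln (snd w) \<le> 0" "snd w * ln (snd w) \<le> 0"
          using w \<open>ln (snd w) \<le> 0\<close> by (auto intro: mult_nonneg_nonpos)
        ultimately show ?thesis by simp
      qed
    qed
    have "((\<lambda>w. fst w * ln (snd w)) \<longlongrightarrow> 0) (at z within ?D)"
      by (rule Lim_null_comparison[OF ev2 lim0])
    then show ?thesis using z0 by (simp add: continuous_within)
  qed
  then show ?thesis by (simp add: continuous_on_eq_continuous_within)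
qed

lemma plnq_cont:
  fixes P Q :: "'a::topological_space \<Rightarrow> real"
  assumes "continuous_on S P" "continuous_on S Q" "\<And>s. s \<in> S \<Longrightarrow> 0 \<le> P s \<and> P s \<le> Q s"
  shows "continuous_on S (\<lambda>s. P s * ln (Q s))"
proof -
  have "continuous_on S (\<lambda>s. (\<lambda>z. fst z * ln (snd z)) (P s, Q s))"
    by (rule continuous_on_compose2[OF plnq_cont2, where f="\<lambda>s. (P s, Q s)"]) (use assms in \<open>auto intro: continuous_intros\<close>)
  then show ?thesis by simp
qed

lemma plog4_eq:
  fixes P Q1 Q2 Q3 Q4 :: real
  assumes "0 \<le> P" "P \<le> Q1" "P \<le> Q2" "P \<le> Q3" "P \<le> Q4"
  shows "P * log 2 (Q1 * Q2 / (Q3 * Q4)) = (P * ln Q1 + P * ln Q2 - P * ln Q3 - P * ln Q4) / ln 2"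
proof (cases "P = 0")
  case False
  then have "P > 0" using assms by simp
  then have "Q1 > 0" "Q2 > 0" "Q3 > 0" "Q4 > 0" using assms by auto
  then show ?thesis by (simp add: log_def ln_mult ln_div algebra_simps diff_divide_distrib add_divide_distrib)
qed simp

lemma plog4_cont:
  fixes P Q1 Q2 Q3 Q4 :: "'a::topological_space \<Rightarrow> real"
  assumes "continuous_on S P" "continuous_on S Q1" "continuous_on S Q2" "continuous_on S Q3" "continuous_on S Q4"
    and "\<And>s. s \<in> S \<Longrightarrow> 0 \<le> P s \<and> P s \<le> Q1 s \<and> P s \<le> Q2 s \<and> P s \<le> Q3 s \<and> P s \<le> Q4 s"
  shows "continuous_on S (\<lambda>s. P s * log 2 (Q1 s * Q2 s / (Q3 s * Q4 s)))"
proof -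
  have "continuous_on S (\<lambda>s. (P s * ln (Q1 s) + P s * ln (Q2 s) - P s * ln (Q3 s) - P s * ln (Q4 s)) / ln 2)"
    using assms by (intro continuous_intros plnq_cont) auto
  then show ?thesis
    by (rule continuous_on_cong[THEN iffD1, rotated 2]) (use assms(6) plog4_eq in auto)
qed



lemma lin_dep:
  fixes c :: "nat \<Rightarrow> 'a \<Rightarrow> real"
  assumes "finite X" "finite Z" "card X < card Z"
  shows "\<exists>\<mu>. (\<exists>z\<in>Z. \<mu> z \<noteq> 0) \<and> (\<forall>x\<in>X. (\<Sum>z\<in>Z. \<mu> z * c z x) = 0)"
  using assms
proof (induction X arbitrary: Z c rule: finite_induct)
  case empty
  then obtain z where "z \<in> Z" by (metis card.empty card_gt_0_iff ex_in_conv)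
  then show ?case by (intro exI[of _ "\<lambda>_. 1"]) auto
next
  case (insert x0 X')
  have cX: "card (insert x0 X') = card X' + 1" using insert by simp
  show ?case
  proof (cases "\<forall>z\<in>Z. c z x0 = 0")
    case True
    obtain \<mu> where \<mu>: "\<exists>z\<in>Z. \<mu> z \<noteq> 0" "\<forall>x\<in>X'. (\<Sum>z\<in>Z. \<mu> z * c z x) = 0"
      using insert.IH[of Z c] insert.prems cX by auto
    show ?thesis using \<mu> True by (intro exI[of _ \<mu>]) auto
  next
    case False
    then obtain z0 where z0: "z0 \<in> Z" "c z0 x0 \<noteq> 0" by auto
    define Z' where "Z' = Z - {z0}"
    define c' where "c' = (\<lambda>z x. c z x - c z x0 / c z0 x0 * c z0 x)"
    have fZ': "finite Z'" using insert.prems Z'_def by auto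
    have cZ': "card Z' = card Z - 1" using z0 insert.prems Z'_def by (simp add: card_Diff_singleton)
    obtain \<mu>' where \<mu>': "\<exists>z\<in>Z'. \<mu>' z \<noteq> 0" "\<forall>x\<in>X'. (\<Sum>z\<in>Z'. \<mu>' z * c' z x) = 0"
    proof -
      have "card X' < card Z'" using insert.prems cX cZ' by simp
      then show ?thesis using insert.IH[OF fZ', of c'] that by blast
    qed
    have all: "(\<Sum>z\<in>Z'. \<mu>' z * c' z x) = 0" if "x \<in> insert x0 X'" for x
    proof (cases "x = x0")
      case True
      then show ?thesis using z0 by (simp add: c'_def)
    qed (use that \<mu>' in auto)
    define \<mu> where "\<mu> = \<mu>'(z0 := - (\<Sum>z\<in>Z'. \<mu>' z * c z x0) / c z0 x0)"
    have "(\<Sum>z\<in>Z. \<mu> z * c z x) = 0" if "x \<in> insert x0 X'" for x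
    proof -
      have "(\<Sum>z\<in>Z. \<mu> z * c z x) = \<mu> z0 * c z0 x + (\<Sum>z\<in>Z'. \<mu> z * c z x)"
        using z0 insert.prems Z'_def by (simp add: sum.remove)
      also have "(\<Sum>z\<in>Z'. \<mu> z * c z x) = (\<Sum>z\<in>Z'. \<mu>' z * c z x)"
        by (rule sum.cong) (auto simp: \<mu>_def Z'_def)
      also have "\<mu> z0 * c z0 x + (\<Sum>z\<in>Z'. \<mu>' z * c z x) = (\<Sum>z\<in>Z'. \<mu>' z * c' z x)"
        by (simp add: \<mu>_def c'_def algebra_simps sum_subtractf sum_distrib_left sum_distrib_right sum_divide_distrib)
      finally show ?thesis using all[OF that] by simp
    qed
    moreover have "\<exists>z\<in>Z. \<mu> z \<noteq> 0" using \<mu>' by (auto simp: \<mu>_def Z'_def)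
    ultimately show ?thesis by blast
  qed
qed

lemma lp_reduce:
  fixes c :: "nat \<Rightarrow> 'a \<Rightarrow> real" and f :: "nat \<Rightarrow> real"
  assumes X: "finite X" and cnn: "\<forall>z x. x\<in>X \<longrightarrow> 0 \<le> c z x"
    and f0: "\<forall>z. (\<forall>x\<in>X. c z x = 0) \<longrightarrow> f z = 0"
  shows "finite S \<Longrightarrow> (\<forall>z\<in>S. 0 \<le> l z) \<Longrightarrow> (\<forall>x\<in>X. (\<Sum>z\<in>S. l z * c z x) = 1) \<Longrightarrow>
    \<exists>T l'. T \<subseteq> S \<and> card T \<le> card X \<and> (\<forall>z\<in>T. 0 \<le> l' z) \<and> (\<forall>x\<in>X. (\<Sum>z\<in>T. l' z * c z x) = 1)
       \<and> (\<Sum>z\<in>T. l' z * f z) \<le> (\<Sum>z\<in>S. l z * f z)"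
proof (induction "card S" arbitrary: S l rule: less_induct)
  case less
  show ?case
  proof (cases "card S \<le> card X")
    case True
    then show ?thesis using less.prems by (intro exI[of _ S] exI[of _ l]) auto
  next
    case False
    obtain \<mu> where \<mu>: "\<exists>z\<in>S. \<mu> z \<noteq> 0" "\<forall>x\<in>X. (\<Sum>z\<in>S. \<mu> z * c z x) = 0"
      using lin_dep[OF X less.prems(1), of c] False by auto
    define \<nu> where "\<nu> = (if (\<Sum>z\<in>S. \<mu> z * f z) \<le> 0 then \<mu> else (\<lambda>z. - \<mu> z))"
    have \<nu>1: "\<exists>z\<in>S. \<nu> z \<noteq> 0" using \<mu>(1) by (auto simp: \<nu>_def)
    have \<nu>2: "\<forall>x\<in>X. (\<Sum>z\<in>S. \<nu> z * c z x) = 0" using \<mu>(2) by (auto simp: \<nu>_def sum_negf)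
    have \<nu>3: "(\<Sum>z\<in>S. \<nu> z * f z) \<le> 0" by (auto simp: \<nu>_def sum_negf)
    show ?thesis
    proof (cases "\<exists>z\<in>S. \<nu> z < 0")
      case True
      define NS where "NS = {z\<in>S. \<nu> z < 0}"
      have fNS: "finite NS" "NS \<noteq> {}" using True less.prems(1) by (auto simp: NS_def)
      define t where "t = Min ((\<lambda>z. l z / (- \<nu> z)) ` NS)"
      have "t \<in> (\<lambda>z. l z / (- \<nu> z)) ` NS" unfolding t_def using fNS by (intro Min_in) auto
      then obtain zs where zs: "zs \<in> NS" "t = l zs / (- \<nu> zs)" by blast
      have tle: "t \<le> l z / (- \<nu> z)" if "z \<in> NS" for z
        unfolding t_def using fNS that by auto
      have t0: "0 \<le> t" using zs less.prems(2) by (auto simp: NS_def intro!: divide_nonneg_neg)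
      define l' where "l' = (\<lambda>z. l z + t * \<nu> z)"
      have l'nn: "0 \<le> l' z" if "z \<in> S" for z
      proof (cases "\<nu> z < 0")
        case True
        then have "t \<le> l z / (- \<nu> z)" using tle that by (auto simp: NS_def)
        then have "t * (- \<nu> z) \<le> l z" using True pos_le_divide_eq[of "- \<nu> z" t "l z"] by linarith
        then show ?thesis by (simp add: l'_def)
      next
        case False
        then show ?thesis using t0 less.prems(2) that by (simp add: l'_def)
      qed
      have l'zs: "l' zs = 0" using zs by (auto simp: l'_def NS_def)
      define S' where "S' = S - {zs}"
      have zsS: "zs \<in> S" using zs by (auto simp: NS_def)
      have cS': "card S' < card S" using zsS less.prems(1) S'_def by (metis card_Diff1_less)
      have fS': "finite S'" using less.prems(1) S'_def by simp
      have sumc: "(\<Sum>z\<in>S'. l' z * c z x) = 1" if "x \<in> X" for x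
      proof -
        have "(\<Sum>z\<in>S'. l' z * c z x) = (\<Sum>z\<in>S. l' z * c z x)"
          using zsS l'zs less.prems(1) by (simp add: S'_def sum.remove)
        also have "\<dots> = (\<Sum>z\<in>S. l z * c z x) + t * (\<Sum>z\<in>S. \<nu> z * c z x)"
          by (simp add: l'_def algebra_simps sum.distrib sum_distrib_left)
        finally show ?thesis using that \<nu>2 less.prems(3) by simp
      qed
      have sumf: "(\<Sum>z\<in>S'. l' z * f z) \<le> (\<Sum>z\<in>S. l z * f z)"
      proof -
        have "(\<Sum>z\<in>S'. l' z * f z) = (\<Sum>z\<in>S. l' z * f z)"
          using zsS l'zs less.prems(1) by (simp add: S'_def sum.remove)
        also have "\<dots> = (\<Sum>z\<in>S. l z * f z) + t * (\<Sum>z\<in>S. \<nu> z * f z)"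
          by (simp add: l'_def algebra_simps sum.distrib sum_distrib_left)
        also have "\<dots> \<le> (\<Sum>z\<in>S. l z * f z)" using t0 \<nu>3 by (simp add: mult_nonneg_nonpos)
        finally show ?thesis .
      qed
      obtain T l'' where T: "T \<subseteq> S'" "card T \<le> card X" "\<forall>z\<in>T. 0 \<le> l'' z"
        "\<forall>x\<in>X. (\<Sum>z\<in>T. l'' z * c z x) = 1" "(\<Sum>z\<in>T. l'' z * f z) \<le> (\<Sum>z\<in>S'. l' z * f z)"
        using less.hyps[OF cS' fS', of l'] l'nn sumc by (auto simp: S'_def)
      show ?thesis using T sumf S'_def by (intro exI[of _ T] exI[of _ l'']) auto
    next
      case False
      then have nn: "\<forall>z\<in>S. 0 \<le> \<nu> z" by auto
      obtain z0 where z0: "z0 \<in> S" "\<nu> z0 \<noteq> 0" using \<nu>1 by auto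
      have cz0: "c z0 x = 0" if "x \<in> X" for x
      proof -
        have "\<forall>z\<in>S. \<nu> z * c z x = 0"
          using sum_nonneg_eq_0_iff[OF less.prems(1), of "\<lambda>z. \<nu> z * c z x"] \<nu>2 that nn cnn by auto
        then show ?thesis using z0 by auto
      qed
      then have fz0: "f z0 = 0" using f0 by auto
      define S' where "S' = S - {z0}"
      have cS': "card S' < card S" using z0 less.prems(1) S'_def by (metis card_Diff1_less)
      have fS': "finite S'" using less.prems(1) S'_def by simp
      have sumc: "(\<Sum>z\<in>S'. l z * c z x) = 1" if "x \<in> X" for x
        using less.prems(1,3) z0 cz0[OF that] that by (force simp add: S'_def sum.remove)
      have sumf: "(\<Sum>z\<in>S'. l z * f z) = (\<Sum>z\<in>S. l z * f z)"
        using less.prems(1) z0 fz0 by (simp add: S'_def sum.remove)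
      obtain T l'' where T: "T \<subseteq> S'" "card T \<le> card X" "\<forall>z\<in>T. 0 \<le> l'' z"
        "\<forall>x\<in>X. (\<Sum>z\<in>T. l'' z * c z x) = 1" "(\<Sum>z\<in>T. l'' z * f z) \<le> (\<Sum>z\<in>S'. l z * f z)"
        using less.hyps[OF cS' fS', of l] less.prems(2) sumc by (auto simp: S'_def)
      show ?thesis using T sumf S'_def by (intro exI[of _ T] exI[of _ l'']) auto
    qed
  qed
qed



lemma cont_coord [continuous_intros]: "continuous_on S (\<lambda>f::'a \<Rightarrow> 'b::topological_space. f a)"
  by (rule continuous_on_subset[OF continuous_on_product_coordinates]) auto

lemma cont_coord2: "continuous_on S (\<lambda>f::'a \<Rightarrow> 'c \<Rightarrow> 'b::topological_space. f a b)"
  by (rule continuous_on_product_then_coordinatewise[OF cont_coord])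

lemma chan_reduce:
  fixes F :: "('a \<Rightarrow> real) \<Rightarrow> real"
  assumes X: "finite X"
    and cong: "\<And>c c'. (\<forall>x\<in>X. c x = c' x) \<Longrightarrow> F c = F c'"
    and homog: "\<And>c t. 0 \<le> t \<Longrightarrow> F (\<lambda>x. t * c x) = t * F c"
    and ch: "is_channel X N' q'"
  shows "\<exists>q. is_channel X (card X) q \<and> (\<forall>x z. (x \<notin> X \<or> card X \<le> z) \<longrightarrow> q x z = 0) \<and>
     (\<Sum>z<card X. F (\<lambda>x. q x z)) \<le> (\<Sum>z<N'. F (\<lambda>x. q' x z))"
proof -
  have F0: "F (\<lambda>x. 0) = 0" using homog[of 0 "\<lambda>x. 0"] by simp
  define c where "c = (\<lambda>z x. if x \<in> X \<and> z < N' then q' x z else 0)"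
  define f where "f = (\<lambda>z. F (c z))"
  have cnn: "\<forall>z x. x\<in>X \<longrightarrow> 0 \<le> c z x" using ch by (auto simp: c_def is_channel_def)
  have f0: "\<forall>z. (\<forall>x\<in>X. c z x = 0) \<longrightarrow> f z = 0"
  proof (intro allI impI)
    fix z assume "\<forall>x\<in>X. c z x = 0"
    then have "F (c z) = F (\<lambda>x. 0)" by (intro cong) simp
    then show "f z = 0" using F0 by (simp add: f_def)
  qed
  have sum1: "\<forall>x\<in>X. (\<Sum>z\<in>{..<N'}. (\<lambda>_. 1) z * c z x) = 1" using ch by (auto simp: c_def is_channel_def)
  obtain T l' where T: "T \<subseteq> {..<N'}" "card T \<le> card X" "\<forall>z\<in>T. 0 \<le> l' z"
     "\<forall>x\<in>X. (\<Sum>z\<in>T. l' z * c z x) = 1" "(\<Sum>z\<in>T. l' z * f z) \<le> (\<Sum>z\<in>{..<N'}. (\<lambda>_. 1) z * f z)"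
    using lp_reduce[OF X cnn f0, of "{..<N'}" "\<lambda>_. 1"] sum1 by auto
  have fT: "finite T" using T(1) finite_subset by blast
  obtain e where e: "bij_betw e {0..<card T} T" using ex_bij_betw_nat_finite[OF fT] by blast
  define q where "q = (\<lambda>x j. if x \<in> X \<and> j < card T then l' (e j) * c (e j) x else 0)"
  have eT: "e j \<in> T" if "j < card T" for j using e that by (auto simp: bij_betw_def)
  have split: "{..<card X} = {..<card T} \<union> {card T..<card X}" using T(2) by auto
  have sumq: "(\<Sum>j<card X. q x j) = 1" if "x \<in> X" for x
  proof -
    have "(\<Sum>j<card X. q x j) = (\<Sum>j<card T. q x j)"
      by (subst split, subst sum.union_disjoint) (auto simp: q_def)
    also have "\<dots> = (\<Sum>j\<in>{0..<card T}. l' (e j) * c (e j) x)"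
      using that by (intro sum.cong) (auto simp: q_def)
    also have "\<dots> = (\<Sum>z\<in>T. l' z * c z x)" by (rule sum.reindex_bij_betw[OF e])
    finally show ?thesis using T(4) that by simp
  qed
  have chq: "is_channel X (card X) q"
    unfolding is_channel_def using sumq cnn T(3) eT by (auto simp: q_def)
  have zero: "\<forall>x z. (x \<notin> X \<or> card X \<le> z) \<longrightarrow> q x z = 0" using T(2) by (auto simp: q_def)
  have "(\<Sum>j<card X. F (\<lambda>x. q x j)) = (\<Sum>j<card T. F (\<lambda>x. q x j))"
    by (subst split, subst sum.union_disjoint) (auto simp: q_def F0)
  also have "\<dots> = (\<Sum>j\<in>{0..<card T}. l' (e j) * f (e j))"
  proof (rule sum.cong)
    fix j assume j: "j \<in> {0..<card T}"
    have "F (\<lambda>x. q x j) = F (\<lambda>x. l' (e j) * c (e j) x)" using j by (intro cong) (simp add: q_def)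
    also have "\<dots> = l' (e j) * f (e j)" using homog T(3) eT j by (auto simp: f_def)
    finally show "F (\<lambda>x. q x j) = l' (e j) * f (e j)" .
  qed auto
  also have "\<dots> = (\<Sum>z\<in>T. l' z * f z)" by (rule sum.reindex_bij_betw[OF e])
  also have "\<dots> \<le> (\<Sum>z<N'. f z)" using T(5) by simp
  also have "\<dots> = (\<Sum>z<N'. F (\<lambda>x. q' x z))"
  proof (intro sum.cong refl)
    fix z assume "z \<in> {..<N'}"
    then show "f z = F (\<lambda>x. q' x z)" unfolding f_def by (intro cong) (simp add: c_def)
  qed
  finally show ?thesis using chq zero by blast
qed

lemma compact_Pi_UNIV:
  fixes S :: "'i \<Rightarrow> 'b::topological_space set"
  assumes "\<And>i. compact (S i)"
  shows "compact (Pi UNIV S)"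
proof -
  have "compactin (product_topology (\<lambda>i. euclidean) UNIV) (PiE UNIV S)"
    using assms by (subst compactin_PiE) auto
  then show ?thesis by (simp add: euclidean_product_topology PiE_UNIV_domain)
qed

lemma abstract_min:
  fixes F :: "('a \<Rightarrow> real) \<Rightarrow> real"
  assumes X: "finite X" "X \<noteq> {}"
    and cong: "\<And>c c'. (\<forall>x\<in>X. c x = c' x) \<Longrightarrow> F c = F c'"
    and homog: "\<And>c t. 0 \<le> t \<Longrightarrow> F (\<lambda>x. t * c x) = t * F c"
    and cont: "continuous_on {c. \<forall>x\<in>X. 0 \<le> c x \<and> c x \<le> 1} F"
  shows "\<exists>N q. is_channel X N q \<and> N \<le> card X \<and>
    (\<forall>N' q'. is_channel X N' q' \<longrightarrow> (\<Sum>z<N. F (\<lambda>x. q x z)) \<le> (\<Sum>z<N'. F (\<lambda>x. q' x z)))"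
proof -
  define m where "m = card X"
  have m0: "0 < m" using X by (simp add: m_def card_gt_0_iff)
  define K where "K = {q :: 'a \<Rightarrow> nat \<Rightarrow> real. is_channel X m q \<and> (\<forall>x z. (x \<notin> X \<or> m \<le> z) \<longrightarrow> q x z = 0)}"
  define B where "B = (\<lambda>x z. if x \<in> X \<and> z < m then {0..1::real} else {0})"
  have KB: "K = Pi UNIV (\<lambda>x. Pi UNIV (B x)) \<inter> (\<Inter>x\<in>X. {q. (\<Sum>z<m. q x z) = 1})"
  proof (intro set_eqI iffI)
    fix q assume q: "q \<in> K"
    have le1: "q x z \<le> 1" if "x \<in> X" "z < m" for x z
    proof -
      have "q x z \<le> (\<Sum>z<m. q x z)"
        using q that by (intro member_le_sum) (auto simp: K_def is_channel_def)
      then show ?thesis using q that by (auto simp: K_def is_channel_def)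
    qed
    show "q \<in> Pi UNIV (\<lambda>x. Pi UNIV (B x)) \<inter> (\<Inter>x\<in>X. {q. (\<Sum>z<m. q x z) = 1})"
      using q le1 by (auto simp: K_def B_def is_channel_def)
  next
    fix q assume "q \<in> Pi UNIV (\<lambda>x. Pi UNIV (B x)) \<inter> (\<Inter>x\<in>X. {q. (\<Sum>z<m. q x z) = 1})"
    then show "q \<in> K" unfolding K_def B_def is_channel_def Pi_def
      by (auto split: if_splits) (metis (no_types) empty_iff insert_iff not_le)
  qed
  have cK: "compact K"
  proof -
    have "compact (Pi UNIV (\<lambda>x. Pi UNIV (B x)))"
      by (intro compact_Pi_UNIV) (auto simp: B_def)
    moreover have "closed (\<Inter>x\<in>X. {q :: 'a \<Rightarrow> nat \<Rightarrow> real. (\<Sum>z<m. q x z) = 1})"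
    proof (intro closed_INT ballI)
      fix x
      have "continuous_on UNIV (\<lambda>q :: 'a \<Rightarrow> nat \<Rightarrow> real. \<Sum>z<m. q x z)"
        by (intro continuous_on_sum cont_coord2)
      then show "closed {q :: 'a \<Rightarrow> nat \<Rightarrow> real. (\<Sum>z<m. q x z) = 1}"
        using closed_Collect_eq[OF _ continuous_on_const, of "\<lambda>q :: 'a \<Rightarrow> nat \<Rightarrow> real. \<Sum>z<m. q x z" 1] by auto
    qed
    ultimately show ?thesis unfolding KB by (rule compact_Int_closed)
  qed
  define q0 where "q0 = (\<lambda>x (z::nat). if x \<in> X \<and> z = 0 then 1 else (0::real))"
  have "q0 \<in> K" using m0 by (auto simp: K_def q0_def is_channel_def)
  then have Kne: "K \<noteq> {}" by auto
  define G where "G = (\<lambda>q :: 'a \<Rightarrow> nat \<Rightarrow> real. \<Sum>z<m. F (\<lambda>x. q x z))"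
  have cG: "continuous_on K G"
    unfolding G_def
  proof (intro continuous_on_sum)
    fix z assume z: "z \<in> {..<m}"
    have c1: "continuous_on K (\<lambda>q :: 'a \<Rightarrow> nat \<Rightarrow> real. (\<lambda>x. q x z))"
      by (rule continuous_on_coordinatewise_then_product) (rule cont_coord2)
    have im: "(\<lambda>q. (\<lambda>x. q x z)) ` K \<subseteq> {c. \<forall>x\<in>X. 0 \<le> c x \<and> c x \<le> 1}"
      using KB by (auto simp: K_def is_channel_def B_def Pi_def) (metis z lessThan_iff)+
    show "continuous_on K (\<lambda>q. F (\<lambda>x. q x z))"
      by (rule continuous_on_compose2[OF cont c1 im])
  qed
  obtain qs where qs: "qs \<in> K" "\<forall>q\<in>K. G qs \<le> G q"
    using continuous_attains_inf[OF cK Kne cG] by blast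
  show ?thesis
  proof (intro exI conjI allI impI)
    show "is_channel X m qs" using qs by (auto simp: K_def)
    show "m \<le> card X" by (simp add: m_def)
    fix N' q' assume ch: "is_channel X N' q'"
    obtain q where q: "is_channel X (card X) q" "\<forall>x z. (x \<notin> X \<or> card X \<le> z) \<longrightarrow> q x z = 0"
      "(\<Sum>z<card X. F (\<lambda>x. q x z)) \<le> (\<Sum>z<N'. F (\<lambda>x. q' x z))"
      using chan_reduce[where F=F and X=X, OF X(1) cong homog ch] by blast
    have "q \<in> K" using q by (auto simp: K_def m_def)
    then have "G qs \<le> G q" using qs by auto
    then show "(\<Sum>z<m. F (\<lambda>x. qs x z)) \<le> (\<Sum>z<N'. F (\<lambda>x. q' x z))"
      using q(3) by (simp add: G_def m_def)
  qed
qed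



definition mm :: "'u set \<Rightarrow> ('u \<Rightarrow> real) \<Rightarrow> ('u \<Rightarrow> 'a) \<Rightarrow> ('u \<Rightarrow> 'g) \<Rightarrow> ('a \<Rightarrow> real) \<Rightarrow> 'u \<Rightarrow> real" where
  "mm Om R \<alpha> g col u = (\<Sum>u'\<in>{u'\<in>Om. g u' = g u}. R u' * col (\<alpha> u'))"

lemma sum_prod_pair: "(\<Sum>w\<in>A \<times> B. h w) = (\<Sum>u\<in>A. \<Sum>b\<in>B. h (u, b))"
  by (simp add: sum.cartesian_product)

lemma cmi_alt:
  "cond_mutual_info Om P A B C =
     (\<Sum>w\<in>Om. P w * log 2 ((marg Om P (\<lambda>u. (A u, B u, C u)) (A w, B w, C w) * marg Om P C (C w)) /
                     (marg Om P (\<lambda>u. (A u, C u)) (A w, C w) * marg Om P (\<lambda>u. (B u, C u)) (B w, C w))))"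
  unfolding cond_mutual_info_def by (intro sum.cong) auto

lemma marg_reindex:
  assumes "bij_betw \<Phi> Om0 Om"
  shows "marg Om P f y = marg Om0 (\<lambda>w. P (\<Phi> w)) (\<lambda>w. f (\<Phi> w)) y"
proof -
  have "bij_betw \<Phi> {w\<in>Om0. f (\<Phi> w) = y} {w\<in>Om. f w = y}"
    using assms by (auto simp: bij_betw_def inj_on_def image_iff)
  then show ?thesis unfolding marg_def by (simp add: sum.reindex_bij_betw)
qed

lemma cmi_reindex:
  assumes "bij_betw \<Phi> Om0 Om"
  shows "cond_mutual_info Om P A B C =
    cond_mutual_info Om0 (\<lambda>w. P (\<Phi> w)) (\<lambda>w. A (\<Phi> w)) (\<lambda>w. B (\<Phi> w)) (\<lambda>w. C (\<Phi> w))"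
  unfolding cond_mutual_info_def marg_reindex[OF assms]
  by (rule sum.reindex_bij_betw[OF assms, symmetric])

lemma marg_fst:
  assumes "finite Om0" "\<forall>u\<in>Om0. (\<Sum>b<N. c (\<alpha> u) b) = 1"
  shows "marg (Om0 \<times> {..<N}) (\<lambda>w. R (fst w) * c (\<alpha> (fst w)) (snd w)) (\<lambda>w. g (fst w)) y = marg Om0 R g y"
proof -
  have "{w \<in> Om0 \<times> {..<N}. g (fst w) = y} = {u\<in>Om0. g u = y} \<times> {..<N}" by auto
  then have "marg (Om0 \<times> {..<N}) (\<lambda>w. R (fst w) * c (\<alpha> (fst w)) (snd w)) (\<lambda>w. g (fst w)) y
     = (\<Sum>u\<in>{u\<in>Om0. g u = y}. \<Sum>b<N. R u * c (\<alpha> u) b)"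
    unfolding marg_def by (simp only: sum_prod_pair fst_conv snd_conv)
  also have "\<dots> = (\<Sum>u\<in>{u\<in>Om0. g u = y}. R u)"
    using assms by (intro sum.cong) (auto simp: sum_distrib_left[symmetric])
  finally show ?thesis by (simp add: marg_def)
qed

lemma marg_inj:
  assumes "u \<in> Om0" "b < N"
    and "\<And>u' b'. u' \<in> Om0 \<Longrightarrow> b' < N \<Longrightarrow> f (u', b') = f (u, b) \<longleftrightarrow> g u' = g u \<and> b' = b"
  shows "marg (Om0 \<times> {..<N}) (\<lambda>w. R (fst w) * c (\<alpha> (fst w)) (snd w)) f (f (u, b)) = mm Om0 R \<alpha> g (\<lambda>x. c x b) u"
proof -
  have "{w \<in> Om0 \<times> {..<N}. f w = f (u, b)} = {u'\<in>Om0. g u' = g u} \<times> {b}"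
    using assms by auto
  then show ?thesis unfolding marg_def mm_def by (simp only: sum_prod_pair fst_conv snd_conv) simp
qed

definition Fmi :: "'u set \<Rightarrow> ('u \<Rightarrow> real) \<Rightarrow> ('u \<Rightarrow> 'a) \<Rightarrow> ('u \<Rightarrow> 'b1) \<Rightarrow> ('u \<Rightarrow> 'b2) \<Rightarrow> ('u \<Rightarrow> 'b3) \<Rightarrow> ('a \<Rightarrow> real) \<Rightarrow> real" where
  "Fmi Om R \<alpha> A0 B0 C0 col = (\<Sum>u\<in>Om. R u * col (\<alpha> u) *
     log 2 (mm Om R \<alpha> (\<lambda>u. (A0 u, B0 u, C0 u)) col u * mm Om R \<alpha> C0 col u /
            (mm Om R \<alpha> (\<lambda>u. (A0 u, C0 u)) col u * mm Om R \<alpha> (\<lambda>u. (B0 u, C0 u)) col u)))"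

lemma cmi_T2:
  assumes fin: "finite Om0"
    and hA: "\<And>u b. A (u, b) = A0 u" and hB: "\<And>u b. B (u, b) = B0 u"
    and hC: "\<And>u u' b b'. u \<in> Om0 \<Longrightarrow> u' \<in> Om0 \<Longrightarrow> b < N \<Longrightarrow> b' < N \<Longrightarrow>
               C (u', b') = C (u, b) \<longleftrightarrow> C0 u' = C0 u \<and> b' = b"
  shows "cond_mutual_info (Om0 \<times> {..<N}) (\<lambda>w. R (fst w) * c (\<alpha> (fst w)) (snd w)) A B C
     = (\<Sum>b<N. Fmi Om0 R \<alpha> A0 B0 C0 (\<lambda>x. c x b))"
proof -
  let ?P = "\<lambda>w. R (fst w) * c (\<alpha> (fst w)) (snd w)"
  let ?Om = "Om0 \<times> {..<N}"
  have "cond_mutual_info ?Om ?P A B C = (\<Sum>u\<in>Om0. \<Sum>b<N. ?P (u,b) *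
     log 2 ((marg ?Om ?P (\<lambda>u. (A u, B u, C u)) (A (u,b), B (u,b), C (u,b)) * marg ?Om ?P C (C (u,b))) /
                     (marg ?Om ?P (\<lambda>u. (A u, C u)) (A (u,b), C (u,b)) * marg ?Om ?P (\<lambda>u. (B u, C u)) (B (u,b), C (u,b)))))"
    unfolding cmi_alt by (simp only: sum_prod_pair)
  also have "\<dots> = (\<Sum>u\<in>Om0. \<Sum>b<N. R u * c (\<alpha> u) b *
     log 2 (mm Om0 R \<alpha> (\<lambda>u. (A0 u, B0 u, C0 u)) (\<lambda>x. c x b) u * mm Om0 R \<alpha> C0 (\<lambda>x. c x b) u /
            (mm Om0 R \<alpha> (\<lambda>u. (A0 u, C0 u)) (\<lambda>x. c x b) u * mm Om0 R \<alpha> (\<lambda>u. (B0 u, C0 u)) (\<lambda>x. c x b) u)))"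
  proof (intro sum.cong refl)
    fix u b assume u: "u \<in> Om0" and b: "b \<in> {..<N}"
    have e1: "marg ?Om ?P (\<lambda>u. (A u, B u, C u)) (A (u,b), B (u,b), C (u,b)) = mm Om0 R \<alpha> (\<lambda>u. (A0 u, B0 u, C0 u)) (\<lambda>x. c x b) u"
      using marg_inj[of u Om0 b N "\<lambda>u. (A u, B u, C u)" "\<lambda>u. (A0 u, B0 u, C0 u)" R c \<alpha>] u b hA hB hC by auto
    have e2: "marg ?Om ?P C (C (u,b)) = mm Om0 R \<alpha> C0 (\<lambda>x. c x b) u"
      using marg_inj[of u Om0 b N C C0 R c \<alpha>] u b hC by auto
    have e3: "marg ?Om ?P (\<lambda>u. (A u, C u)) (A (u,b), C (u,b)) = mm Om0 R \<alpha> (\<lambda>u. (A0 u, C0 u)) (\<lambda>x. c x b) u"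
      using marg_inj[of u Om0 b N "\<lambda>u. (A u, C u)" "\<lambda>u. (A0 u, C0 u)" R c \<alpha>] u b hA hC by auto
    have e4: "marg ?Om ?P (\<lambda>u. (B u, C u)) (B (u,b), C (u,b)) = mm Om0 R \<alpha> (\<lambda>u. (B0 u, C0 u)) (\<lambda>x. c x b) u"
      using marg_inj[of u Om0 b N "\<lambda>u. (B u, C u)" "\<lambda>u. (B0 u, C0 u)" R c \<alpha>] u b hB hC by auto
    show "?P (u,b) *
     log 2 ((marg ?Om ?P (\<lambda>u. (A u, B u, C u)) (A (u,b), B (u,b), C (u,b)) * marg ?Om ?P C (C (u,b))) /
                     (marg ?Om ?P (\<lambda>u. (A u, C u)) (A (u,b), C (u,b)) * marg ?Om ?P (\<lambda>u. (B u, C u)) (B (u,b), C (u,b))))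
      = R u * c (\<alpha> u) b *
     log 2 (mm Om0 R \<alpha> (\<lambda>u. (A0 u, B0 u, C0 u)) (\<lambda>x. c x b) u * mm Om0 R \<alpha> C0 (\<lambda>x. c x b) u /
            (mm Om0 R \<alpha> (\<lambda>u. (A0 u, C0 u)) (\<lambda>x. c x b) u * mm Om0 R \<alpha> (\<lambda>u. (B0 u, C0 u)) (\<lambda>x. c x b) u))"
      by (simp only: e1 e2 e3 e4 fst_conv snd_conv)
  qed
  also have "\<dots> = (\<Sum>b<N. Fmi Om0 R \<alpha> A0 B0 C0 (\<lambda>x. c x b))"
    unfolding Fmi_def by (rule sum.swap)
  finally show ?thesis .
qed

lemma cmi_T1:
  assumes fin: "finite Om0" and s1: "\<forall>u\<in>Om0. (\<Sum>b<N. c (\<alpha> u) b) = 1"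
  shows "cond_mutual_info (Om0 \<times> {..<N}) (\<lambda>w. R (fst w) * c (\<alpha> (fst w)) (snd w))
           (\<lambda>w. A0 (fst w)) (\<lambda>w. B0 (fst w)) (\<lambda>w. C0 (fst w))
     = cond_mutual_info Om0 R A0 B0 C0"
proof -
  let ?P = "\<lambda>w. R (fst w) * c (\<alpha> (fst w)) (snd w)"
  let ?Om = "Om0 \<times> {..<N}"
  have mf: "\<And>g y. marg ?Om ?P (\<lambda>w. g (fst w)) y = marg Om0 R g y"
    by (rule marg_fst[where c=c and \<alpha>=\<alpha> and N=N, OF fin s1])
  have "cond_mutual_info ?Om ?P (\<lambda>w. A0 (fst w)) (\<lambda>w. B0 (fst w)) (\<lambda>w. C0 (fst w)) =
     (\<Sum>u\<in>Om0. \<Sum>b<N. R u * c (\<alpha> u) b * log 2 ((marg Om0 R (\<lambda>u. (A0 u, B0 u, C0 u)) (A0 u, B0 u, C0 u) * marg Om0 R C0 (C0 u)) /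
                     (marg Om0 R (\<lambda>u. (A0 u, C0 u)) (A0 u, C0 u) * marg Om0 R (\<lambda>u. (B0 u, C0 u)) (B0 u, C0 u))))"
    unfolding cmi_alt
    using mf[of "\<lambda>u. (A0 u, B0 u, C0 u)"] mf[of C0] mf[of "\<lambda>u. (A0 u, C0 u)"] mf[of "\<lambda>u. (B0 u, C0 u)"]
    by (simp only: sum_prod_pair fst_conv snd_conv)
  also have "\<dots> = (\<Sum>u\<in>Om0. R u * log 2 ((marg Om0 R (\<lambda>u. (A0 u, B0 u, C0 u)) (A0 u, B0 u, C0 u) * marg Om0 R C0 (C0 u)) /
                     (marg Om0 R (\<lambda>u. (A0 u, C0 u)) (A0 u, C0 u) * marg Om0 R (\<lambda>u. (B0 u, C0 u)) (B0 u, C0 u))))"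
    using s1 by (intro sum.cong refl) (simp add: sum_distrib_left[symmetric] sum_distrib_right[symmetric])
  also have "\<dots> = cond_mutual_info Om0 R A0 B0 C0" unfolding cmi_alt ..
  finally show ?thesis .
qed

definition Fk :: "'u set \<Rightarrow> ('u \<Rightarrow> real) \<Rightarrow> ('u \<Rightarrow> 'a) \<Rightarrow> ('u \<Rightarrow> 'b3) \<Rightarrow> ('a \<Rightarrow> real) \<Rightarrow> real" where
  "Fk Om R \<alpha> C0 col = (\<Sum>u\<in>Om. R u * col (\<alpha> u) *
     log 2 (col (\<alpha> u) * marg Om R (\<lambda>u. (\<alpha> u, C0 u)) (\<alpha> u, C0 u) * marg Om R C0 (C0 u) /
            (marg Om R (\<lambda>u. (\<alpha> u, C0 u)) (\<alpha> u, C0 u) * mm Om R \<alpha> C0 col u)))"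

lemma cmi_Tk:
  assumes fin: "finite Om0" and s1: "\<forall>u\<in>Om0. (\<Sum>b<N. c (\<alpha> u) b) = 1"
  shows "cond_mutual_info (Om0 \<times> {..<N}) (\<lambda>w. R (fst w) * c (\<alpha> (fst w)) (snd w))
           (\<lambda>w. \<alpha> (fst w)) snd (\<lambda>w. C0 (fst w))
     = (\<Sum>b<N. Fk Om0 R \<alpha> C0 (\<lambda>x. c x b))"
proof -
  let ?P = "\<lambda>w. R (fst w) * c (\<alpha> (fst w)) (snd w)"
  let ?Om = "Om0 \<times> {..<N}"
  have mf: "\<And>g y. marg ?Om ?P (\<lambda>w. g (fst w)) y = marg Om0 R g y"
    by (rule marg_fst[where c=c and \<alpha>=\<alpha> and N=N, OF fin s1])
  have "cond_mutual_info ?Om ?P (\<lambda>w. \<alpha> (fst w)) snd (\<lambda>w. C0 (fst w)) = (\<Sum>u\<in>Om0. \<Sum>b<N. ?P (u,b) *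
     log 2 ((marg ?Om ?P (\<lambda>w. (\<alpha> (fst w), snd w, C0 (fst w))) (\<alpha> u, b, C0 u) * marg ?Om ?P (\<lambda>w. C0 (fst w)) (C0 u)) /
                     (marg ?Om ?P (\<lambda>w. (\<alpha> (fst w), C0 (fst w))) (\<alpha> u, C0 u) * marg ?Om ?P (\<lambda>w. (snd w, C0 (fst w))) (b, C0 u))))"
    unfolding cmi_alt by (simp only: sum_prod_pair fst_conv snd_conv)
  also have "\<dots> = (\<Sum>u\<in>Om0. \<Sum>b<N. R u * c (\<alpha> u) b *
     log 2 (c (\<alpha> u) b * marg Om0 R (\<lambda>u. (\<alpha> u, C0 u)) (\<alpha> u, C0 u) * marg Om0 R C0 (C0 u) /
            (marg Om0 R (\<lambda>u. (\<alpha> u, C0 u)) (\<alpha> u, C0 u) * mm Om0 R \<alpha> C0 (\<lambda>x. c x b) u)))"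
  proof (intro sum.cong refl)
    fix u b assume u: "u \<in> Om0" and b: "b \<in> {..<N}"
    have e1: "marg ?Om ?P (\<lambda>w. (\<alpha> (fst w), snd w, C0 (fst w))) (\<alpha> u, b, C0 u)
       = c (\<alpha> u) b * marg Om0 R (\<lambda>u. (\<alpha> u, C0 u)) (\<alpha> u, C0 u)"
    proof -
      have "{w \<in> ?Om. (\<alpha> (fst w), snd w, C0 (fst w)) = (\<alpha> u, b, C0 u)} = {u'\<in>Om0. (\<alpha> u', C0 u') = (\<alpha> u, C0 u)} \<times> {b}"
        using b by auto
      then have "marg ?Om ?P (\<lambda>w. (\<alpha> (fst w), snd w, C0 (fst w))) (\<alpha> u, b, C0 u)
          = (\<Sum>u'\<in>{u'\<in>Om0. (\<alpha> u', C0 u') = (\<alpha> u, C0 u)}. R u' * c (\<alpha> u') b)"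
        unfolding marg_def by (simp only: sum_prod_pair fst_conv snd_conv) simp
      also have "\<dots> = (\<Sum>u'\<in>{u'\<in>Om0. (\<alpha> u', C0 u') = (\<alpha> u, C0 u)}. c (\<alpha> u) b * R u')"
        by (intro sum.cong) auto
      finally show ?thesis by (simp add: marg_def sum_distrib_left)
    qed
    have e2: "marg ?Om ?P (\<lambda>w. (snd w, C0 (fst w))) (b, C0 u) = mm Om0 R \<alpha> C0 (\<lambda>x. c x b) u"
      using marg_inj[of u Om0 b N "\<lambda>w. (snd w, C0 (fst w))" C0 R c \<alpha>] u b by auto
    show "?P (u,b) *
     log 2 ((marg ?Om ?P (\<lambda>w. (\<alpha> (fst w), snd w, C0 (fst w))) (\<alpha> u, b, C0 u) * marg ?Om ?P (\<lambda>w. C0 (fst w)) (C0 u)) /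
                     (marg ?Om ?P (\<lambda>w. (\<alpha> (fst w), C0 (fst w))) (\<alpha> u, C0 u) * marg ?Om ?P (\<lambda>w. (snd w, C0 (fst w))) (b, C0 u)))
       = R u * c (\<alpha> u) b *
     log 2 (c (\<alpha> u) b * marg Om0 R (\<lambda>u. (\<alpha> u, C0 u)) (\<alpha> u, C0 u) * marg Om0 R C0 (C0 u) /
            (marg Om0 R (\<lambda>u. (\<alpha> u, C0 u)) (\<alpha> u, C0 u) * mm Om0 R \<alpha> C0 (\<lambda>x. c x b) u))"
      using e1 e2 mf[of C0] mf[of "\<lambda>u. (\<alpha> u, C0 u)"] by simp
  qed
  also have "\<dots> = (\<Sum>b<N. Fk Om0 R \<alpha> C0 (\<lambda>x. c x b))"
    unfolding Fk_def by (rule sum.swap)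
  finally show ?thesis .
qed




lemma mm_scale: "mm Om R \<alpha> g (\<lambda>x. t * col x) u = t * mm Om R \<alpha> g col u"
  unfolding mm_def by (simp add: sum_distrib_left algebra_simps)

lemma mm_cong: "(\<forall>x\<in>\<alpha> ` Om. col x = col' x) \<Longrightarrow> mm Om R \<alpha> g col u = mm Om R \<alpha> g col' u"
  unfolding mm_def by (intro sum.cong) auto

lemma mm_ge:
  assumes "finite Om" "u \<in> Om" "\<And>u'. u' \<in> Om \<Longrightarrow> 0 \<le> R u' * col (\<alpha> u')"
  shows "R u * col (\<alpha> u) \<le> mm Om R \<alpha> g col u"
  unfolding mm_def using assms by (intro member_le_sum) auto

lemma marg_ge:
  assumes "finite Om" "u \<in> Om" "\<And>u'. u' \<in> Om \<Longrightarrow> 0 \<le> R u'"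
  shows "R u \<le> marg Om R g (g u)"
  unfolding marg_def using assms by (intro member_le_sum) auto

lemma ratio_scale4:
  fixes t a b c d :: real
  assumes "t \<noteq> 0"
  shows "(t * a) * (t * b) / ((t * c) * (t * d)) = a * b / (c * d)"
proof -
  have "(t * a) * (t * b) / ((t * c) * (t * d)) = ((t * t) * (a * b)) / ((t * t) * (c * d))"
    by (simp add: algebra_simps)
  also have "\<dots> = a * b / (c * d)" by (rule mult_divide_mult_cancel_left) (use assms in simp)
  finally show ?thesis .
qed

lemma ratio_scalek:
  fixes t a b c d e :: real
  assumes "t \<noteq> 0"
  shows "(t * a) * b * c / (d * (t * e)) = a * b * c / (d * e)"
proof -
  have "(t * a) * b * c / (d * (t * e)) = t * (a * b * c) / (t * (d * e))"
    by (simp add: algebra_simps)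
  also have "\<dots> = a * b * c / (d * e)" by (rule mult_divide_mult_cancel_left) (use assms in simp)
  finally show ?thesis .
qed

lemma Fmi_homog:
  assumes "0 \<le> t"
  shows "Fmi Om R \<alpha> A0 B0 C0 (\<lambda>x. t * col x) = t * Fmi Om R \<alpha> A0 B0 C0 col"
proof (cases "t = 0")
  case True then show ?thesis by (simp add: Fmi_def)
next
  case False
  then show ?thesis unfolding Fmi_def mm_scale
    by (simp add: ratio_scale4 sum_distrib_left algebra_simps)
qed

lemma Fmi_cong: "(\<forall>x\<in>\<alpha> ` Om. col x = col' x) \<Longrightarrow> Fmi Om R \<alpha> A0 B0 C0 col = Fmi Om R \<alpha> A0 B0 C0 col'"
  unfolding Fmi_def
  by (intro sum.cong refl) (simp add: mm_cong[of \<alpha> Om col col'])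

lemma Fk_homog:
  assumes "0 \<le> t"
  shows "Fk Om R \<alpha> C0 (\<lambda>x. t * col x) = t * Fk Om R \<alpha> C0 col"
proof (cases "t = 0")
  case True then show ?thesis by (simp add: Fk_def)
next
  case False
  then show ?thesis unfolding Fk_def mm_scale
    by (simp add: ratio_scalek sum_distrib_left algebra_simps)
qed

lemma Fk_cong: "(\<forall>x\<in>\<alpha> ` Om. col x = col' x) \<Longrightarrow> Fk Om R \<alpha> C0 col = Fk Om R \<alpha> C0 col'"
  unfolding Fk_def
  by (intro sum.cong refl) (simp add: mm_cong[of \<alpha> Om col col'])

lemma mm_cont: "continuous_on S (\<lambda>col. mm Om R \<alpha> g col u)"
  unfolding mm_def by (intro continuous_intros)

lemma Fmi_cont:
  fixes \<alpha> :: "'u \<Rightarrow> 'a"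
  assumes fin: "finite Om" and R: "\<And>u. u \<in> Om \<Longrightarrow> 0 \<le> R u" and \<alpha>: "\<alpha> ` Om \<subseteq> X"
  shows "continuous_on {c. \<forall>x\<in>X. 0 \<le> c x \<and> c x \<le> 1} (Fmi Om R \<alpha> A0 B0 C0)"
  unfolding Fmi_def
proof (intro continuous_on_sum plog4_cont continuous_intros mm_cont)
  fix u and col :: "'a \<Rightarrow> real" assume u: "u \<in> Om" and col: "col \<in> {c. \<forall>x\<in>X. 0 \<le> c x \<and> c x \<le> 1}"
  have nn: "0 \<le> R u' * col (\<alpha> u')" if "u' \<in> Om" for u'
    using R[OF that] col \<alpha> that by auto
  show "0 \<le> R u * col (\<alpha> u) \<and> R u * col (\<alpha> u) \<le> mm Om R \<alpha> (\<lambda>u. (A0 u, B0 u, C0 u)) col u \<and>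
      R u * col (\<alpha> u) \<le> mm Om R \<alpha> C0 col u \<and>
      R u * col (\<alpha> u) \<le> mm Om R \<alpha> (\<lambda>u. (A0 u, C0 u)) col u \<and>
      R u * col (\<alpha> u) \<le> mm Om R \<alpha> (\<lambda>u. (B0 u, C0 u)) col u"
    using nn u by (auto intro: mm_ge[OF fin])
qed

lemma Fk_cont:
  fixes \<alpha> :: "'u \<Rightarrow> 'a"
  assumes fin: "finite Om" and R: "\<And>u. u \<in> Om \<Longrightarrow> 0 \<le> R u" and \<alpha>: "\<alpha> ` Om \<subseteq> X"
  shows "continuous_on {c. \<forall>x\<in>X. 0 \<le> c x \<and> c x \<le> 1} (Fk Om R \<alpha> C0)"
  unfolding Fk_def
proof (intro continuous_on_sum plog4_cont continuous_intros mm_cont)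
  fix u and col :: "'a \<Rightarrow> real" assume u: "u \<in> Om" and col: "col \<in> {c. \<forall>x\<in>X. 0 \<le> c x \<and> c x \<le> 1}"
  have nn: "0 \<le> R u' * col (\<alpha> u')" if "u' \<in> Om" for u'
    using R[OF that] col \<alpha> that by auto
  have c01: "0 \<le> col (\<alpha> u)" "col (\<alpha> u) \<le> 1" using col \<alpha> u by auto
  have Ru: "0 \<le> R u" using R u by auto
  have m1: "R u \<le> marg Om R (\<lambda>u. (\<alpha> u, C0 u)) (\<alpha> u, C0 u)"
    using marg_ge[OF fin u, of R "\<lambda>u. (\<alpha> u, C0 u)"] R by auto
  have m2: "R u \<le> marg Om R C0 (C0 u)"
    using marg_ge[OF fin u, of R C0] R by auto
  have P1: "R u * col (\<alpha> u) \<le> R u" using Ru c01 by (simp add: mult_left_le)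
  have "R u * col (\<alpha> u) \<le> col (\<alpha> u) * marg Om R (\<lambda>u. (\<alpha> u, C0 u)) (\<alpha> u, C0 u)"
    using mult_right_mono[OF m1 c01(1)] by (simp add: mult.commute)
  then show "0 \<le> R u * col (\<alpha> u) \<and>
       R u * col (\<alpha> u) \<le> col (\<alpha> u) * marg Om R (\<lambda>u. (\<alpha> u, C0 u)) (\<alpha> u, C0 u) \<and>
       R u * col (\<alpha> u) \<le> marg Om R C0 (C0 u) \<and>
       R u * col (\<alpha> u) \<le> marg Om R (\<lambda>u. (\<alpha> u, C0 u)) (\<alpha> u, C0 u) \<and>
       R u * col (\<alpha> u) \<le> mm Om R \<alpha> C0 col u"
    using nn u P1 m1 m2 Ru c01 by (auto intro: mm_ge[OF fin])
qed



definition Hd :: "'u set \<Rightarrow> ('u \<Rightarrow> real) \<Rightarrow> ('u \<Rightarrow> 'a) \<Rightarrow> ('u \<Rightarrow> 'v) \<Rightarrow> ('v \<Rightarrow> 'r \<Rightarrow> real)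
   \<Rightarrow> ('a \<Rightarrow> real) \<Rightarrow> ('u \<Rightarrow> 'r) \<Rightarrow> real" where
  "Hd Om R \<alpha> vv dl col r = (\<Sum>u\<in>Om. R u * col (\<alpha> u) * dl (vv u) (r u))"

definition Fd :: "'u set \<Rightarrow> ('u \<Rightarrow> real) \<Rightarrow> ('u \<Rightarrow> 'a) \<Rightarrow> ('u \<Rightarrow> 'v) \<Rightarrow> ('u \<Rightarrow> 'y) \<Rightarrow> 'r set
   \<Rightarrow> ('v \<Rightarrow> 'r \<Rightarrow> real) \<Rightarrow> ('a \<Rightarrow> real) \<Rightarrow> real" where
  "Fd Om R \<alpha> vv io Rg dl col = Inf ((\<lambda>\<phi>. Hd Om R \<alpha> vv dl col (\<lambda>u. \<phi> (io u))) ` {\<phi>. \<forall>y. \<phi> y \<in> Rg})"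

lemma Fd_as_Min:
  fixes io :: "'u \<Rightarrow> 'y" and Om :: "'u set"
  assumes fin: "finite Om" "finite Rg" and ne: "Rg \<noteq> {}"
  defines "Rs \<equiv> (\<lambda>\<phi>. restrict (\<lambda>u. \<phi> (io u)) Om) ` {\<phi>. \<forall>y. \<phi> y \<in> Rg}"
  shows "finite Rs" "Rs \<noteq> {}"
    "Fd Om R \<alpha> vv io Rg dl col = Min ((\<lambda>r. Hd Om R \<alpha> vv dl col r) ` Rs)"
proof -
  have sub: "Rs \<subseteq> PiE Om (\<lambda>_. Rg)" unfolding Rs_def by auto
  show fR: "finite Rs" using finite_subset[OF sub] fin by (simp add: finite_PiE)
  obtain r0 where r0: "r0 \<in> Rg" using ne by auto
  show neR: "Rs \<noteq> {}" unfolding Rs_def using r0 by (auto intro!: exI[of _ "\<lambda>_. r0"])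
  have eq: "(\<lambda>\<phi>. Hd Om R \<alpha> vv dl col (\<lambda>u. \<phi> (io u))) ` {\<phi>. \<forall>y. \<phi> y \<in> Rg} = (\<lambda>r. Hd Om R \<alpha> vv dl col r) ` Rs"
    unfolding Rs_def image_image Hd_def by (intro image_cong refl sum.cong) auto
  show "Fd Om R \<alpha> vv io Rg dl col = Min ((\<lambda>r. Hd Om R \<alpha> vv dl col r) ` Rs)"
    unfolding Fd_def eq using fR neR by (intro cInf_eq_Min) auto
qed

lemma cont_Min_fin:
  fixes f :: "'i \<Rightarrow> 'x::topological_space \<Rightarrow> real"
  assumes "finite I" "I \<noteq> {}" "\<And>i. i \<in> I \<Longrightarrow> continuous_on S (f i)"
  shows "continuous_on S (\<lambda>x. Min ((\<lambda>i. f i x) ` I))"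
  using assms
proof (induction I rule: finite_ne_induct)
  case (singleton i) then show ?case by simp
next
  case (insert i I)
  have "continuous_on S (\<lambda>x. min (f i x) (Min ((\<lambda>i. f i x) ` I)))"
    using insert by (intro continuous_on_min) auto
  then show ?case using insert by (simp add: Min_insert)
qed

lemma Fd_props:
  assumes fin: "finite Om" "finite Rg" and ne: "Rg \<noteq> {}"
  shows "\<And>t col. 0 \<le> t \<Longrightarrow> Fd Om R \<alpha> vv io Rg dl (\<lambda>x. t * col x) = t * Fd Om R \<alpha> vv io Rg dl col"
    and "\<And>col col'. (\<forall>x\<in>\<alpha> ` Om. col x = col' x) \<Longrightarrow> Fd Om R \<alpha> vv io Rg dl col = Fd Om R \<alpha> vv io Rg dl col'"
    and "continuous_on S (Fd Om R \<alpha> vv io Rg dl)"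
proof -
  define Rs where "Rs = (\<lambda>\<phi>. restrict (\<lambda>u. \<phi> (io u)) Om) ` {\<phi>. \<forall>y. \<phi> y \<in> Rg}"
  note M = Fd_as_Min[where io=io, OF fin ne, folded Rs_def]
  show "Fd Om R \<alpha> vv io Rg dl (\<lambda>x. t * col x) = t * Fd Om R \<alpha> vv io Rg dl col" if t: "0 \<le> t" for t col
  proof -
    have e: "(\<lambda>r. Hd Om R \<alpha> vv dl (\<lambda>x. t * col x) r) ` Rs = (\<lambda>y. t * y) ` ((\<lambda>r. Hd Om R \<alpha> vv dl col r) ` Rs)"
      unfolding image_image Hd_def by (intro image_cong refl) (simp add: sum_distrib_left algebra_simps)
    have mo: "mono (\<lambda>y::real. t * y)" using t by (auto intro: monoI mult_left_mono)
    have "Fd Om R \<alpha> vv io Rg dl (\<lambda>x. t * col x) = Min ((\<lambda>y. t * y) ` ((\<lambda>r. Hd Om R \<alpha> vv dl col r) ` Rs))"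
      using M(3)[of R \<alpha> vv dl "\<lambda>x. t * col x"] e by simp
    also have "\<dots> = t * Min ((\<lambda>r. Hd Om R \<alpha> vv dl col r) ` Rs)"
      using mono_Min_commute[OF mo, of "(\<lambda>r. Hd Om R \<alpha> vv dl col r) ` Rs"] M(1,2) by simp
    also have "\<dots> = t * Fd Om R \<alpha> vv io Rg dl col" using M(3)[of R \<alpha> vv dl col] by simp
    finally show ?thesis .
  qed
  show "Fd Om R \<alpha> vv io Rg dl col = Fd Om R \<alpha> vv io Rg dl col'" if "\<forall>x\<in>\<alpha> ` Om. col x = col' x" for col col'
    unfolding M(3) Hd_def using that by (intro arg_cong[where f=Min] image_cong refl sum.cong) auto
  have "continuous_on S (\<lambda>col. Min ((\<lambda>r. Hd Om R \<alpha> vv dl col r) ` Rs))"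
    using M(1,2) by (intro cont_Min_fin) (auto simp: Hd_def intro!: continuous_intros)
  moreover have "Fd Om R \<alpha> vv io Rg dl = (\<lambda>col. Min ((\<lambda>r. Hd Om R \<alpha> vv dl col r) ` Rs))"
    by (rule ext) (rule M(3))
  ultimately show "continuous_on S (Fd Om R \<alpha> vv io Rg dl)" by simp
qed

lemma Inf_split:
  fixes H :: "nat \<Rightarrow> ('y \<Rightarrow> 'r) \<Rightarrow> real" and ins :: "'y \<Rightarrow> nat \<Rightarrow> 'y"
  assumes fin: "\<And>b. b < N \<Longrightarrow> finite (H b ` \<Psi>)" and ne: "\<Psi> \<noteq> {}"
    and clos: "\<And>\<psi> b. \<psi> \<in> \<Psi> \<Longrightarrow> b < N \<Longrightarrow> (\<lambda>y. \<psi> (ins y b)) \<in> \<Psi>"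
    and glue: "\<And>\<phi>s. (\<forall>b<N. \<phi>s b \<in> \<Psi>) \<Longrightarrow> \<exists>\<psi>\<in>\<Psi>. \<forall>b<N. H b (\<lambda>y. \<psi> (ins y b)) = H b (\<phi>s b)"
  shows "Inf ((\<lambda>\<psi>. \<Sum>b<N. H b (\<lambda>y. \<psi> (ins y b))) ` \<Psi>) = (\<Sum>b<N. Inf (H b ` \<Psi>))"
proof -
  let ?S = "(\<lambda>\<psi>. \<Sum>b<N. H b (\<lambda>y. \<psi> (ins y b))) ` \<Psi>"
  have lb: "(\<Sum>b<N. Inf (H b ` \<Psi>)) \<le> s" if "s \<in> ?S" for s
  proof -
    obtain \<psi> where \<psi>: "\<psi> \<in> \<Psi>" "s = (\<Sum>b<N. H b (\<lambda>y. \<psi> (ins y b)))" using \<open>s \<in> ?S\<close> by auto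
    have "Inf (H b ` \<Psi>) \<le> H b (\<lambda>y. \<psi> (ins y b))" if "b < N" for b
      using fin[OF that] clos[OF \<psi>(1) that] by (intro cInf_lower) auto
    then show ?thesis using \<psi>(2) by (auto intro: sum_mono)
  qed
  have "\<forall>b<N. \<exists>\<phi>\<in>\<Psi>. H b \<phi> = Inf (H b ` \<Psi>)"
  proof (intro allI impI)
    fix b assume b: "b < N"
    have "Inf (H b ` \<Psi>) \<in> H b ` \<Psi>" using fin[OF b] ne by (simp add: cInf_eq_Min)
    then show "\<exists>\<phi>\<in>\<Psi>. H b \<phi> = Inf (H b ` \<Psi>)" by auto
  qed
  then obtain \<phi>s where \<phi>s: "\<forall>b<N. \<phi>s b \<in> \<Psi> \<and> H b (\<phi>s b) = Inf (H b ` \<Psi>)" by metis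
  then obtain \<psi> where \<psi>: "\<psi> \<in> \<Psi>" "\<forall>b<N. H b (\<lambda>y. \<psi> (ins y b)) = H b (\<phi>s b)"
    using glue[of \<phi>s] by auto
  have mem: "(\<Sum>b<N. Inf (H b ` \<Psi>)) \<in> ?S"
  proof
    show "(\<Sum>b<N. Inf (H b ` \<Psi>)) = (\<Sum>b<N. H b (\<lambda>y. \<psi> (ins y b)))"
      using \<psi>(2) \<phi>s by (intro sum.cong) auto
  qed (rule \<psi>(1))
  have bdd: "bdd_below ?S" using lb by (auto simp: bdd_below_def)
  show ?thesis
  proof (rule antisym)
    show "Inf ?S \<le> (\<Sum>b<N. Inf (H b ` \<Psi>))" using mem bdd by (rule cInf_lower)
    show "(\<Sum>b<N. Inf (H b ` \<Psi>)) \<le> Inf ?S" using mem lb by (intro cInf_greatest) auto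
  qed
qed



definition Om0 :: "nat \<Rightarrow> nat \<Rightarrow> nat \<Rightarrow> (nat \<Rightarrow> 'a set) \<Rightarrow> 's set \<Rightarrow> 'v set \<Rightarrow> (nat \<Rightarrow> nat)
    \<Rightarrow> (((nat \<Rightarrow> 'a) \<times> 's \<times> 'v) \<times> (nat \<Rightarrow> nat)) set" where
  "Om0 M J k AX AS AV n = src_space M AX AS AV \<times> PiE ({J+1..M} - {k}) (\<lambda>\<kappa>. {0..<n \<kappa>})"

definition R0 :: "nat \<Rightarrow> nat \<Rightarrow> nat \<Rightarrow> ((nat \<Rightarrow> 'a) \<times> 's \<times> 'v \<Rightarrow> real) \<Rightarrow> (nat \<Rightarrow> 'a \<Rightarrow> nat \<Rightarrow> real)
    \<Rightarrow> ((nat \<Rightarrow> 'a) \<times> 's \<times> 'v) \<times> (nat \<Rightarrow> nat) \<Rightarrow> real" where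
  "R0 M J k p q = (\<lambda>((x, s, v), z). p (x, s, v) * (\<Prod>\<kappa>\<in>{J+1..M} - {k}. q \<kappa> (x \<kappa>) (z \<kappa>)))"

definition alph :: "nat \<Rightarrow> ((nat \<Rightarrow> 'a) \<times> 's \<times> 'v) \<times> (nat \<Rightarrow> nat) \<Rightarrow> 'a" where
  "alph k = (\<lambda>((x, s, v), z). x k)"

definition Phi :: "nat \<Rightarrow> (((nat \<Rightarrow> 'a) \<times> 's \<times> 'v) \<times> (nat \<Rightarrow> nat)) \<times> nat \<Rightarrow> ((nat \<Rightarrow> 'a) \<times> 's \<times> 'v) \<times> (nat \<Rightarrow> nat)" where
  "Phi k = (\<lambda>(u, b). (fst u, (snd u)(k := b)))"

lemma restrict_upd_out: "k \<notin> S \<Longrightarrow> restrict (f(k := b)) S = restrict f S"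
  by (auto simp: restrict_def fun_eq_iff)

lemma restrict_upd_in: "k \<in> S \<Longrightarrow> restrict (f(k := b)) S = (restrict f S)(k := b)"
  by (auto simp: restrict_def fun_eq_iff)

lemma restrict_upd_iff:
  assumes "k \<in> S" "f k = g k"
  shows "restrict (f(k := b)) S = restrict (g(k := b')) S \<longleftrightarrow> restrict f S = restrict g S \<and> b = b'"
proof
  assume h: "restrict (f(k := b)) S = restrict (g(k := b')) S"
  have "b = b'" using fun_cong[OF h, of k] assms by simp
  moreover have "restrict f S = restrict g S"
  proof
    fix j show "restrict f S j = restrict g S j"
      using fun_cong[OF h, of j] assms by (cases "j = k") (auto simp: restrict_def)
  qed
  ultimately show "restrict f S = restrict g S \<and> b = b'" by simp
next
  assume "restrict f S = restrict g S \<and> b = b'"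
  then show "restrict (f(k := b)) S = restrict (g(k := b')) S" using assms
    by (simp add: restrict_upd_in)
qed

lemma bij_Phi:
  assumes "J + 1 \<le> k" "k \<le> M"
  shows "bij_betw (Phi k) (Om0 M J k AX AS AV n \<times> {..<N}) (joint_space M J AX AS AV (n(k := N)))"
proof -
  let ?K' = "{J+1..M} - {k}"
  have kK: "k \<in> {J+1..M}" using assms by auto
  have inj: "inj_on (Phi k) (Om0 M J k AX AS AV n \<times> {..<N})"
  proof (rule inj_onI)
    fix w w' assume w: "w \<in> Om0 M J k AX AS AV n \<times> {..<N}" and w': "w' \<in> Om0 M J k AX AS AV n \<times> {..<N}"
      and eq: "Phi k w = Phi k w'"
    obtain X z b where wd: "w = ((X, z), b)" by (metis prod.collapse)
    obtain X' z' b' where wd': "w' = ((X', z'), b')" by (metis prod.collapse)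
    have zk: "z k = undefined" "z' k = undefined"
      using w w' wd wd' by (auto simp: Om0_def PiE_def extensional_def)
    have e: "X = X'" "z(k := b) = z'(k := b')" using eq wd wd' by (auto simp: Phi_def)
    have "b = b'" using fun_cong[OF e(2), of k] by simp
    moreover have "z = z'"
    proof
      fix j show "z j = z' j" using fun_cong[OF e(2), of j] zk by (cases "j = k") auto
    qed
    ultimately show "w = w'" using wd wd' e by simp
  qed
  have img: "Phi k ` (Om0 M J k AX AS AV n \<times> {..<N}) = joint_space M J AX AS AV (n(k := N))"
  proof (intro set_eqI iffI)
    fix y assume "y \<in> Phi k ` (Om0 M J k AX AS AV n \<times> {..<N})"
    then obtain X z b where "X \<in> src_space M AX AS AV" "z \<in> PiE ?K' (\<lambda>\<kappa>. {0..<n \<kappa>})" "b < N"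
      and y: "y = (X, z(k := b))" by (auto simp: Om0_def Phi_def)
    then show "y \<in> joint_space M J AX AS AV (n(k := N))"
      using kK by (auto simp: joint_space_def PiE_iff extensional_def)
  next
    fix y assume y: "y \<in> joint_space M J AX AS AV (n(k := N))"
    obtain X z where yd: "y = (X, z)" by (metis prod.collapse)
    have X: "X \<in> src_space M AX AS AV" and z: "z \<in> PiE {J+1..M} (\<lambda>\<kappa>. {0..<(n(k := N)) \<kappa>})"
      using y yd by (auto simp: joint_space_def)
    have "z(k := undefined) \<in> PiE ?K' (\<lambda>\<kappa>. {0..<n \<kappa>})"
    proof (rule PiE_I)
      fix i assume i: "i \<in> ?K'"
      then have i1: "i \<in> {J+1..M}" and i2: "i \<noteq> k" by auto
      have "z i \<in> {0..<(n(k := N)) i}" using PiE_mem[OF z i1] .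
      then show "(z(k := undefined)) i \<in> {0..<n i}" using i2 by simp
    next
      fix i assume "i \<notin> ?K'"
      then show "(z(k := undefined)) i = undefined" using z by (cases "i = k") (auto simp: PiE_iff extensional_def)
    qed
    moreover have "z k < N" using PiE_mem[OF z kK] by simp
    moreover have "Phi k ((X, z(k := undefined)), z k) = y" using yd by (simp add: Phi_def)
    ultimately show "y \<in> Phi k ` (Om0 M J k AX AS AV n \<times> {..<N})"
      using X by (force simp: Om0_def)
  qed
  show ?thesis using inj img by (simp add: bij_betw_def)
qed

lemma pmf_Phi:
  assumes "J + 1 \<le> k" "k \<le> M"
  shows "joint_pmf M J p (q(k := qk)) (Phi k w) = R0 M J k p q (fst w) * qk (alph k (fst w)) (snd w)"
proof -
  obtain x s v z b where wd: "w = (((x, s, v), z), b)" by (metis prod.collapse)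
  have kK: "k \<in> {J+1..M}" using assms by auto
  have "(\<Prod>\<kappa>\<in>{J+1..M}. (q(k := qk)) \<kappa> (x \<kappa>) ((z(k := b)) \<kappa>))
      = qk (x k) b * (\<Prod>\<kappa>\<in>{J+1..M} - {k}. (q(k := qk)) \<kappa> (x \<kappa>) ((z(k := b)) \<kappa>))"
    using kK by (simp add: prod.remove)
  also have "(\<Prod>\<kappa>\<in>{J+1..M} - {k}. (q(k := qk)) \<kappa> (x \<kappa>) ((z(k := b)) \<kappa>)) = (\<Prod>\<kappa>\<in>{J+1..M} - {k}. q \<kappa> (x \<kappa>) (z \<kappa>))"
    by (intro prod.cong) auto
  finally show ?thesis using wd by (simp add: joint_pmf_def Phi_def R0_def alph_def algebra_simps)
qed



definition fA :: "nat \<Rightarrow> ((nat \<Rightarrow> 'a) \<times> 's \<times> 'v) \<times> (nat \<Rightarrow> nat) \<Rightarrow> 'a" where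
  "fA i = (\<lambda>((x, s, v), z). x i)"
definition fB :: "nat \<Rightarrow> ((nat \<Rightarrow> 'a) \<times> 's \<times> 'v) \<times> (nat \<Rightarrow> nat) \<Rightarrow> nat" where
  "fB i = (\<lambda>((x, s, v), z). z i)"
definition fC :: "nat \<Rightarrow> nat \<Rightarrow> ((nat \<Rightarrow> 'a) \<times> 's \<times> 'v) \<times> (nat \<Rightarrow> nat) \<Rightarrow> (nat \<Rightarrow> 'a) \<times> (nat \<Rightarrow> nat) \<times> 's" where
  "fC J i = (\<lambda>((x, s, v), z). (restrict x {1..J}, restrict z {J+1..<i}, s))"
definition fV :: "((nat \<Rightarrow> 'a) \<times> 's \<times> 'v) \<times> (nat \<Rightarrow> nat) \<Rightarrow> 'v" where
  "fV = (\<lambda>((x, s, v), z). v)"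
definition fI :: "nat \<Rightarrow> nat \<Rightarrow> ((nat \<Rightarrow> 'a) \<times> 's \<times> 'v) \<times> (nat \<Rightarrow> nat) \<Rightarrow> (nat \<Rightarrow> 'a) \<times> (nat \<Rightarrow> nat) \<times> 's" where
  "fI M J = (\<lambda>((x, s, v), z). (restrict x {1..J}, restrict z {J+1..M}, s))"
definition insf :: "nat \<Rightarrow> (nat \<Rightarrow> 'a) \<times> (nat \<Rightarrow> nat) \<times> 's \<Rightarrow> nat \<Rightarrow> (nat \<Rightarrow> 'a) \<times> (nat \<Rightarrow> nat) \<times> 's" where
  "insf k = (\<lambda>(y1, y2, y3) b. (y1, y2(k := b), y3))"

lemma rate0_alt: "rate0 M J AX AS AV p n q i =
   cond_mutual_info (joint_space M J AX AS AV n) (joint_pmf M J p q) (fA i) (fB i) (fC J i)"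
  unfolding rate0_def fA_def fB_def fC_def ..

lemma PPhi:
  assumes "J + 1 \<le> k" "k \<le> M"
  shows "(\<lambda>w. joint_pmf M J p (q(k := qk)) (Phi k w)) = (\<lambda>w. R0 M J k p q (fst w) * qk (alph k (fst w)) (snd w))"
  by (rule ext) (rule pmf_Phi[OF assms])

lemma Phi_fA: "(\<lambda>w. fA i (Phi k w)) = (\<lambda>w. fA i (fst w))"
  by (rule ext) (auto simp: fA_def Phi_def split: prod.splits)
lemma Phi_fB: "i \<noteq> k \<Longrightarrow> (\<lambda>w. fB i (Phi k w)) = (\<lambda>w. fB i (fst w))"
  by (rule ext) (auto simp: fB_def Phi_def split: prod.splits)
lemma Phi_fC: "i \<le> k \<Longrightarrow> (\<lambda>w. fC J i (Phi k w)) = (\<lambda>w. fC J i (fst w))"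
  by (rule ext) (auto simp: fC_def Phi_def restrict_upd_out split: prod.splits)
lemma Phi_fAk: "(\<lambda>w. fA k (Phi k w)) = (\<lambda>w. alph k (fst w))"
  by (rule ext) (auto simp: fA_def alph_def Phi_def split: prod.splits)
lemma Phi_fBk: "(\<lambda>w. fB k (Phi k w)) = snd"
  by (rule ext) (auto simp: fB_def Phi_def split: prod.splits)

lemma Om0_undef:
  assumes "u \<in> Om0 M J k AX AS AV n"
  shows "snd u k = undefined"
  using assms by (auto simp: Om0_def PiE_def extensional_def)

lemma Phi_fC_iff:
  assumes "k < i" "J + 1 \<le> k" "u \<in> Om0 M J k AX AS AV n" "u' \<in> Om0 M J k AX AS AV n"
  shows "fC J i (Phi k (u', b')) = fC J i (Phi k (u, b)) \<longleftrightarrow> fC J i u' = fC J i u \<and> b' = b"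
proof -
  obtain x s v z where u: "u = ((x, s, v), z)" by (metis prod.collapse)
  obtain x' s' v' z' where u': "u' = ((x', s', v'), z')" by (metis prod.collapse)
  have kS: "k \<in> {J+1..<i}" using assms by auto
  have zk: "z' k = z k" using Om0_undef[OF assms(3)] Om0_undef[OF assms(4)] u u' by simp
  show ?thesis
    using restrict_upd_iff[where f=z' and g=z and k=k and S="{J+1..<i}" and b=b' and b'=b, OF kS zk] u u'
    by (auto simp: fC_def Phi_def)
qed

definition cstf where
  "cstf M J k AX AS AV p n q i = (if i < k then
      cond_mutual_info (Om0 M J k AX AS AV n) (R0 M J k p q) (fA i) (fB i) (fC J i) else 0)"

definition Gf where
  "Gf M J k AX AS AV p n q i col = (if i < k then 0 else if i = k
      then Fk (Om0 M J k AX AS AV n) (R0 M J k p q) (alph k) (fC J k) col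
      else Fmi (Om0 M J k AX AS AV n) (R0 M J k p q) (alph k) (fA i) (fB i) (fC J i) col)"

lemma rate_decomp:
  assumes kr: "J + 1 \<le> k" "k \<le> M" and i: "i \<in> {J+1..M}"
    and fin: "finite (Om0 M J k AX AS AV n)"
    and s1: "\<forall>u\<in>Om0 M J k AX AS AV n. (\<Sum>b<N. qk (alph k u) b) = 1"
  shows "rate0 M J AX AS AV p (n(k := N)) (q(k := qk)) i
     = cstf M J k AX AS AV p n q i + (\<Sum>b<N. Gf M J k AX AS AV p n q i (\<lambda>x. qk x b))"
proof -
  let ?Om = "Om0 M J k AX AS AV n"
  let ?R = "R0 M J k p q"
  have r: "rate0 M J AX AS AV p (n(k := N)) (q(k := qk)) i =
     cond_mutual_info (?Om \<times> {..<N}) (\<lambda>w. ?R (fst w) * qk (alph k (fst w)) (snd w))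
       (\<lambda>w. fA i (Phi k w)) (\<lambda>w. fB i (Phi k w)) (\<lambda>w. fC J i (Phi k w))"
    unfolding rate0_alt cmi_reindex[OF bij_Phi[OF kr]] PPhi[OF kr] ..
  consider "i < k" | "i = k" | "k < i" by linarith
  then show ?thesis
  proof cases
    case 1
    have eB: "(\<lambda>w. fB i (Phi k w)) = (\<lambda>w. fB i (fst w))" using 1 by (intro Phi_fB) simp
    have eC: "(\<lambda>w. fC J i (Phi k w)) = (\<lambda>w. fC J i (fst w))" using 1 by (intro Phi_fC) simp
    show ?thesis unfolding r Phi_fA eB eC
      using cmi_T1[OF fin, where c=qk and \<alpha>="alph k" and N=N] s1 1
      by (simp add: cstf_def Gf_def)
  next
    case 2
    have eC: "(\<lambda>w. fC J k (Phi k w)) = (\<lambda>w. fC J k (fst w))" by (intro Phi_fC) simp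
    have r2: "rate0 M J AX AS AV p (n(k := N)) (q(k := qk)) i =
      cond_mutual_info (?Om \<times> {..<N}) (\<lambda>w. ?R (fst w) * qk (alph k (fst w)) (snd w))
       (\<lambda>w. alph k (fst w)) snd (\<lambda>w. fC J k (fst w))"
      using r unfolding 2 Phi_fAk Phi_fBk eC .
    show ?thesis unfolding r2 using 2
      cmi_Tk[OF fin, where c=qk and \<alpha>="alph k" and N=N] s1
      by (simp add: cstf_def Gf_def)
  next
    case 3
    have "cond_mutual_info (?Om \<times> {..<N}) (\<lambda>w. ?R (fst w) * qk (alph k (fst w)) (snd w))
       (\<lambda>w. fA i (Phi k w)) (\<lambda>w. fB i (Phi k w)) (\<lambda>w. fC J i (Phi k w))
      = (\<Sum>b<N. Fmi ?Om ?R (alph k) (fA i) (fB i) (fC J i) (\<lambda>x. qk x b))"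
    proof (rule cmi_T2[OF fin])
      show "\<And>u b. fA i (Phi k (u, b)) = fA i u" by (auto simp: fA_def Phi_def split: prod.splits)
      show "\<And>u b. fB i (Phi k (u, b)) = fB i u" using 3 by (auto simp: fB_def Phi_def split: prod.splits)
      show "\<And>u u' b b'. u \<in> ?Om \<Longrightarrow> u' \<in> ?Om \<Longrightarrow> b < N \<Longrightarrow> b' < N \<Longrightarrow>
         fC J i (Phi k (u', b')) = fC J i (Phi k (u, b)) \<longleftrightarrow> fC J i u' = fC J i u \<and> b' = b"
        using Phi_fC_iff[OF 3 kr(1)] by blast
    qed
    then show ?thesis unfolding r using 3 by (simp add: cstf_def Gf_def)
  qed
qed



lemma Hd_restrict: "Hd Om R \<alpha> vv dl col r = Hd Om R \<alpha> vv dl col (restrict r Om)"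
  unfolding Hd_def by (intro sum.cong) auto

lemma dist_decomp:
  fixes AR :: "nat \<Rightarrow> 'r set" and d :: "nat \<Rightarrow> 'v \<Rightarrow> 'r \<Rightarrow> real"
    and p :: "(nat \<Rightarrow> 'a) \<times> 's \<times> 'v \<Rightarrow> real" and q :: "nat \<Rightarrow> 'a \<Rightarrow> nat \<Rightarrow> real"
  assumes kr: "J + 1 \<le> k" "k \<le> M"
    and fin: "finite (Om0 M J k AX AS AV n)" and fAR: "finite (AR l)" and neAR: "AR l \<noteq> {}"
  shows "dist0 M J AX AS AV p (n(k := N)) (q(k := qk)) AR d l
     = (\<Sum>b<N. Fd (Om0 M J k AX AS AV n) (R0 M J k p q) (alph k) fV (fI M J) (AR l) (d l) (\<lambda>x. qk x b))"
proof -
  let ?Om = "Om0 M J k AX AS AV n"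
  let ?R = "R0 M J k p q"
  let ?\<Psi> = "{\<psi> :: (nat \<Rightarrow> 'a) \<times> (nat \<Rightarrow> nat) \<times> 's \<Rightarrow> 'r. \<forall>y. \<psi> y \<in> AR l}"
  define H where "H = (\<lambda>b (\<phi> :: (nat \<Rightarrow> 'a) \<times> (nat \<Rightarrow> nat) \<times> 's \<Rightarrow> 'r).
      Hd ?Om ?R (alph k) fV (d l) (\<lambda>x. qk x b) (\<lambda>u. \<phi> (fI M J u)))"
  have kK: "k \<in> {J+1..M}" using kr by auto
  have sumeq: "(\<Sum>w\<in>joint_space M J AX AS AV (n(k := N)).
              joint_pmf M J p (q(k := qk)) w *
              (case w of ((x, s, v), z) \<Rightarrow> d l v (\<psi> (restrict x {1..J}, restrict z {J+1..M}, s))))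
     = (\<Sum>b<N. H b (\<lambda>y. \<psi> (insf k y b)))" for \<psi>
  proof -
    let ?g = "\<lambda>w. joint_pmf M J p (q(k := qk)) w *
              (case w of ((x, s, v), z) \<Rightarrow> d l v (\<psi> (restrict x {1..J}, restrict z {J+1..M}, s)))"
    have "(\<Sum>w\<in>joint_space M J AX AS AV (n(k := N)). ?g w) = (\<Sum>w\<in>?Om \<times> {..<N}. ?g (Phi k w))"
      by (rule sum.reindex_bij_betw[OF bij_Phi[OF kr], symmetric])
    also have "\<dots> = (\<Sum>u\<in>?Om. \<Sum>b<N. ?g (Phi k (u, b)))" by (rule sum_prod_pair)
    also have "\<dots> = (\<Sum>u\<in>?Om. \<Sum>b<N. ?R u * qk (alph k u) b * d l (fV u) (\<psi> (insf k (fI M J u) b)))"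
    proof (intro sum.cong refl)
      fix u :: "((nat \<Rightarrow> 'a) \<times> 's \<times> 'v) \<times> (nat \<Rightarrow> nat)" and b :: nat
      obtain x s v z where u: "u = ((x, s, v), z)" by (metis prod.collapse)
      have "joint_pmf M J p (q(k := qk)) (Phi k (u, b)) = ?R u * qk (alph k u) b"
        using pmf_Phi[OF kr, of p q qk "(u, b)"] by simp
      moreover have "restrict (z(k := b)) {J+1..M} = (restrict z {J+1..M})(k := b)"
        using kK by (rule restrict_upd_in)
      ultimately show "?g (Phi k (u, b)) = ?R u * qk (alph k u) b * d l (fV u) (\<psi> (insf k (fI M J u) b))"
        using u by (simp add: Phi_def fV_def fI_def insf_def)
    qed
    also have "\<dots> = (\<Sum>b<N. H b (\<lambda>y. \<psi> (insf k y b)))"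
      unfolding H_def Hd_def by (rule sum.swap)
    finally show ?thesis .
  qed
  have d: "dist0 M J AX AS AV p (n(k := N)) (q(k := qk)) AR d l
      = Inf ((\<lambda>\<psi>. \<Sum>b<N. H b (\<lambda>y. \<psi> (insf k y b))) ` ?\<Psi>)"
    unfolding dist0_def sumeq ..
  have split: "Inf ((\<lambda>\<psi>. \<Sum>b<N. H b (\<lambda>y. \<psi> (insf k y b))) ` ?\<Psi>) = (\<Sum>b<N. Inf (H b ` ?\<Psi>))"
  proof (rule Inf_split)
    fix b assume b: "b < N"
    have "H b ` ?\<Psi> \<subseteq> (\<lambda>r. Hd ?Om ?R (alph k) fV (d l) (\<lambda>x. qk x b) r) ` PiE ?Om (\<lambda>_. AR l)"
    proof
      fix h assume "h \<in> H b ` ?\<Psi>"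
      then obtain \<phi> where \<phi>: "\<phi> \<in> ?\<Psi>" "h = H b \<phi>" by auto
      have "h = Hd ?Om ?R (alph k) fV (d l) (\<lambda>x. qk x b) (restrict (\<lambda>u. \<phi> (fI M J u)) ?Om)"
        unfolding \<phi>(2) H_def by (rule Hd_restrict)
      moreover have "restrict (\<lambda>u. \<phi> (fI M J u)) ?Om \<in> PiE ?Om (\<lambda>_. AR l)"
      proof -
        have h\<phi>: "\<And>y. \<phi> y \<in> AR l" using \<phi>(1) by blast
        show ?thesis by (simp add: h\<phi>)
      qed
      ultimately show "h \<in> (\<lambda>r. Hd ?Om ?R (alph k) fV (d l) (\<lambda>x. qk x b) r) ` PiE ?Om (\<lambda>_. AR l)" by blast
    qed
    moreover have "finite (PiE ?Om (\<lambda>_. AR l))" using fin fAR by (simp add: finite_PiE)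
    ultimately show "finite (H b ` ?\<Psi>)" by (meson finite_surj)
  next
    obtain r0 where r0: "r0 \<in> AR l" using neAR by auto
    then show "?\<Psi> \<noteq> {}" by (auto intro!: exI[of _ "\<lambda>_. r0"])
  next
    fix \<psi> b assume "\<psi> \<in> ?\<Psi>" "b < N"
    then show "(\<lambda>y. \<psi> (insf k y b)) \<in> ?\<Psi>" by blast
  next
    fix \<phi>s assume \<phi>s: "\<forall>b<N. \<phi>s b \<in> ?\<Psi>"
    obtain r0 where r0: "r0 \<in> AR l" using neAR by auto
    define \<psi> where "\<psi> = (\<lambda>(y1 :: nat \<Rightarrow> 'a, y2 :: nat \<Rightarrow> nat, y3 :: 's).
        if y2 k < N then \<phi>s (y2 k) (y1, y2(k := undefined), y3) else r0)"
    have \<psi>\<Psi>: "\<psi> \<in> ?\<Psi>" using \<phi>s r0 by (auto simp: \<psi>_def split: prod.splits)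
    have "H b (\<lambda>y. \<psi> (insf k y b)) = H b (\<phi>s b)" if b: "b < N" for b
      unfolding H_def Hd_def
    proof (intro sum.cong refl)
      fix u assume uO: "u \<in> ?Om"
      obtain x s v z where u: "u = ((x, s, v), z)" by (metis prod.collapse)
      have zk: "z k = undefined" using Om0_undef[OF uO] u by simp
      have "(restrict z {J+1..M})(k := undefined) = restrict z {J+1..M}"
        using zk kK by (auto simp: fun_eq_iff restrict_def)
      then have "\<psi> (insf k (fI M J u) b) = \<phi>s b (fI M J u)"
        using b u by (simp add: \<psi>_def insf_def fI_def)
      then show "?R u * qk (alph k u) b * d l (fV u) (\<psi> (insf k (fI M J u) b)) =
                 ?R u * qk (alph k u) b * d l (fV u) (\<phi>s b (fI M J u))" by simp
    qed
    then show "\<exists>\<psi>\<in>?\<Psi>. \<forall>b<N. H b (\<lambda>y. \<psi> (insf k y b)) = H b (\<phi>s b)" using \<psi>\<Psi> by blast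
  qed
  show ?thesis unfolding d split by (simp add: H_def Fd_def)
qed



definition Ftot where
  "Ftot M J L k AX AS AV p n q ARr d a col =
     (\<Sum>i=J+1..M. a i * Gf M J k AX AS AV p n q i col) +
     (\<Sum>l=1..L. a (M + l) * Fd (Om0 M J k AX AS AV n) (R0 M J k p q) (alph k) fV (fI M J) (ARr l) (d l) col)"

definition Cst where
  "Cst M J k AX AS AV p n q a = (\<Sum>i=J+1..M. a i * cstf M J k AX AS AV p n q i)"

lemma obj_decomp:
  fixes ARr :: "nat \<Rightarrow> 'r set" and d :: "nat \<Rightarrow> 'v \<Rightarrow> 'r \<Rightarrow> real"
    and p :: "(nat \<Rightarrow> 'a) \<times> 's \<times> 'v \<Rightarrow> real" and q :: "nat \<Rightarrow> 'a \<Rightarrow> nat \<Rightarrow> real"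
  assumes kr: "J + 1 \<le> k" "k \<le> M"
    and fin: "finite (Om0 M J k AX AS AV n)"
    and s1: "\<forall>u\<in>Om0 M J k AX AS AV n. (\<Sum>b<N. qk (alph k u) b) = 1"
    and ARok: "\<forall>l\<in>{1..L}. finite (ARr l) \<and> ARr l \<noteq> {}"
  shows "objective M J L AX AS AV p ARr d a (n(k := N)) (q(k := qk))
     = Cst M J k AX AS AV p n q a + (\<Sum>b<N. Ftot M J L k AX AS AV p n q ARr d a (\<lambda>x. qk x b))"
proof -
  let ?G = "Gf M J k AX AS AV p n q"
  let ?c = "cstf M J k AX AS AV p n q"
  let ?F = "\<lambda>l. Fd (Om0 M J k AX AS AV n) (R0 M J k p q) (alph k) fV (fI M J) (ARr l) (d l)"
  have r: "(\<Sum>i=J+1..M. a i * rate0 M J AX AS AV p (n(k := N)) (q(k := qk)) i)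
       = (\<Sum>i=J+1..M. a i * ?c i) + (\<Sum>b<N. \<Sum>i=J+1..M. a i * ?G i (\<lambda>x. qk x b))"
  proof -
    have "(\<Sum>i=J+1..M. a i * rate0 M J AX AS AV p (n(k := N)) (q(k := qk)) i)
        = (\<Sum>i=J+1..M. a i * ?c i + (\<Sum>b<N. a i * ?G i (\<lambda>x. qk x b)))"
      by (intro sum.cong refl) (simp add: rate_decomp[OF kr _ fin s1] distrib_left sum_distrib_left)
    also have "\<dots> = (\<Sum>i=J+1..M. a i * ?c i) + (\<Sum>i=J+1..M. \<Sum>b<N. a i * ?G i (\<lambda>x. qk x b))"
      by (rule sum.distrib)
    also have "(\<Sum>i=J+1..M. \<Sum>b<N. a i * ?G i (\<lambda>x. qk x b)) = (\<Sum>b<N. \<Sum>i=J+1..M. a i * ?G i (\<lambda>x. qk x b))"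
      by (rule sum.swap)
    finally show ?thesis .
  qed
  have dd: "(\<Sum>l=1..L. a (M + l) * dist0 M J AX AS AV p (n(k := N)) (q(k := qk)) ARr d l)
       = (\<Sum>b<N. \<Sum>l=1..L. a (M + l) * ?F l (\<lambda>x. qk x b))"
  proof -
    have "(\<Sum>l=1..L. a (M + l) * dist0 M J AX AS AV p (n(k := N)) (q(k := qk)) ARr d l)
       = (\<Sum>l=1..L. \<Sum>b<N. a (M + l) * ?F l (\<lambda>x. qk x b))"
    proof (intro sum.cong refl)
      fix l assume l: "l \<in> {1..L}"
      show "a (M + l) * dist0 M J AX AS AV p (n(k := N)) (q(k := qk)) ARr d l = (\<Sum>b<N. a (M + l) * ?F l (\<lambda>x. qk x b))"
        using dist_decomp[OF kr fin, where l=l and N=N and qk=qk and d=d and p=p and q=q] ARok l by (simp add: sum_distrib_left)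
    qed
    also have "\<dots> = (\<Sum>b<N. \<Sum>l=1..L. a (M + l) * ?F l (\<lambda>x. qk x b))" by (rule sum.swap)
    finally show ?thesis .
  qed
  show ?thesis
    unfolding objective_def r dd Cst_def Ftot_def by (simp add: sum.distrib)
qed



lemma Ftot_props:
  fixes ARr :: "nat \<Rightarrow> 'r set" and d :: "nat \<Rightarrow> 'v \<Rightarrow> 'r \<Rightarrow> real"
    and p :: "(nat \<Rightarrow> 'a) \<times> 's \<times> 'v \<Rightarrow> real" and q :: "nat \<Rightarrow> 'a \<Rightarrow> nat \<Rightarrow> real"
  assumes fin: "finite (Om0 M J k AX AS AV n)"
    and Rnn: "\<And>u. u \<in> Om0 M J k AX AS AV n \<Longrightarrow> 0 \<le> R0 M J k p q u"
    and al: "alph k ` Om0 M J k AX AS AV n \<subseteq> X"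
    and ARok: "\<forall>l\<in>{1..L}. finite (ARr l) \<and> ARr l \<noteq> {}"
  shows "\<And>c c'. (\<forall>x\<in>X. c x = c' x) \<Longrightarrow> Ftot M J L k AX AS AV p n q ARr d a c = Ftot M J L k AX AS AV p n q ARr d a c'"
    and "\<And>c t. 0 \<le> t \<Longrightarrow> Ftot M J L k AX AS AV p n q ARr d a (\<lambda>x. t * c x) = t * Ftot M J L k AX AS AV p n q ARr d a c"
    and "continuous_on {c. \<forall>x\<in>X. 0 \<le> c x \<and> c x \<le> 1} (Ftot M J L k AX AS AV p n q ARr d a)"
proof -
  let ?Om = "Om0 M J k AX AS AV n"
  let ?R = "R0 M J k p q"
  let ?G = "Gf M J k AX AS AV p n q"
  let ?F = "\<lambda>l. Fd ?Om ?R (alph k) fV (fI M J) (ARr l) (d l)"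
  show "Ftot M J L k AX AS AV p n q ARr d a c = Ftot M J L k AX AS AV p n q ARr d a c'"
    if h: "\<forall>x\<in>X. c x = c' x" for c c'
  proof -
    have h': "\<forall>x\<in>alph k ` ?Om. c x = c' x" using h al by blast
    have "?G i c = ?G i c'" for i
      unfolding Gf_def by (simp add: Fk_cong[OF h'] Fmi_cong[OF h'])
    moreover have "?F l c = ?F l c'" if "l \<in> {1..L}" for l
    proof -
      have "finite (ARr l)" "ARr l \<noteq> {}" using ARok that by auto
      then show ?thesis by (rule Fd_props(2)[OF fin _ _ h'])
    qed
    ultimately show ?thesis unfolding Ftot_def
      by (intro arg_cong2[where f="(+)"] sum.cong refl) auto
  qed
  show "Ftot M J L k AX AS AV p n q ARr d a (\<lambda>x. t * c x) = t * Ftot M J L k AX AS AV p n q ARr d a c"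
    if t: "0 \<le> t" for c t
  proof -
    have "?G i (\<lambda>x. t * c x) = t * ?G i c" for i
      unfolding Gf_def by (simp add: Fk_homog[OF t] Fmi_homog[OF t])
    moreover have "?F l (\<lambda>x. t * c x) = t * ?F l c" if "l \<in> {1..L}" for l
    proof -
      have "finite (ARr l)" "ARr l \<noteq> {}" using ARok that by auto
      then show ?thesis by (rule Fd_props(1)[OF fin _ _ t])
    qed
    ultimately have "Ftot M J L k AX AS AV p n q ARr d a (\<lambda>x. t * c x) =
       (\<Sum>i=J+1..M. a i * (t * ?G i c)) + (\<Sum>l=1..L. a (M + l) * (t * ?F l c))"
      unfolding Ftot_def by (intro arg_cong2[where f="(+)"] sum.cong refl) auto
    also have "\<dots> = t * Ftot M J L k AX AS AV p n q ARr d a c"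
      unfolding Ftot_def by (simp add: sum_distrib_left distrib_left mult.left_commute)
    finally show ?thesis .
  qed
  let ?D = "{c. \<forall>x\<in>X. 0 \<le> c x \<and> c x \<le> 1}"
  have cG: "continuous_on ?D (?G i)" for i
  proof -
    consider "i < k" | "i = k" | "k < i" by linarith
    then show ?thesis
    proof cases
      case 1 then show ?thesis unfolding Gf_def by (simp add: continuous_on_const)
    next
      case 2 then show ?thesis unfolding Gf_def using Fk_cont[OF fin Rnn al] by simp
    next
      case 3 then show ?thesis unfolding Gf_def using Fmi_cont[OF fin Rnn al] by simp
    qed
  qed
  have cF: "continuous_on ?D (?F l)" if "l \<in> {1..L}" for l
  proof -
    have "finite (ARr l)" "ARr l \<noteq> {}" using ARok that by auto
    then show ?thesis by (rule Fd_props(3)[OF fin])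
  qed
  show "continuous_on ?D (Ftot M J L k AX AS AV p n q ARr d a)"
  proof -
    have "continuous_on ?D (\<lambda>c. (\<Sum>i=J+1..M. a i * ?G i c) + (\<Sum>l=1..L. a (M + l) * ?F l c))"
      by (intro continuous_intros cG cF) auto
    then show ?thesis unfolding Ftot_def[abs_def] .
  qed
qed



theorem lemma9:
  fixes M J L k :: nat
    and AX :: "nat \<Rightarrow> 'a set" and AS :: "'s set" and AV :: "'v set"
    and p :: "(nat \<Rightarrow> 'a) \<times> 's \<times> 'v \<Rightarrow> real"
    and AR :: "nat \<Rightarrow> 'r set" and d :: "nat \<Rightarrow> 'v \<Rightarrow> 'r \<Rightarrow> real" and dmax :: "nat \<Rightarrow> real"
    and a :: "nat \<Rightarrow> real"
    and n :: "nat \<Rightarrow> nat" and q :: "nat \<Rightarrow> 'a \<Rightarrow> nat \<Rightarrow> real"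
  assumes "1 \<le> M" and "J \<le> M" and "1 \<le> L"
    and "J + 1 \<le> k" and "k \<le> M"
    and "\<forall>i\<in>{1..M}. finite (AX i)" and "finite AS" and "finite AV"
    and "\<forall>w\<in>src_space M AX AS AV. 0 \<le> p w"
    and "(\<Sum>w\<in>src_space M AX AS AV. p w) = 1"
    and "\<forall>l\<in>{1..L}. finite (AR l) \<and> AR l \<noteq> {}"
    and "\<forall>l\<in>{1..L}. \<forall>v\<in>AV. \<forall>r\<in>AR l. 0 \<le> d l v r \<and> d l v r \<le> dmax l"
    and "\<forall>i\<in>{J+1..M+L}. 0 \<le> a i"
    and "\<forall>\<kappa>\<in>{J+1..M} - {k}. is_channel (AX \<kappa>) (n \<kappa>) (q \<kappa>)"
  shows "\<exists>N qk. is_channel (AX k) N qk \<and> N \<le> card (AX k) \<and>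
           (\<forall>N' qk'. is_channel (AX k) N' qk' \<longrightarrow>
              objective M J L AX AS AV p AR d a (n(k := N)) (q(k := qk))
                \<le> objective M J L AX AS AV p AR d a (n(k := N')) (q(k := qk')))"
proof -
  have kr: "J + 1 \<le> k" "k \<le> M" using assms(4,5) .
  have k1: "k \<in> {1..M}" using kr by auto
  have finX: "finite (AX k)" using assms(6) k1 by auto
  have src_ne: "src_space M AX AS AV \<noteq> {}"
    using assms(10) by auto
  then obtain x s v where xsv: "((x, s, v)) \<in> src_space M AX AS AV" by (metis prod_cases3 ex_in_conv)
  have xk: "x k \<in> AX k" using xsv k1 by (auto simp: src_space_def PiE_iff)
  then have neX: "AX k \<noteq> {}" by auto
  let ?Om = "Om0 M J k AX AS AV n"
  have finsrc: "finite (src_space M AX AS AV)"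
    unfolding src_space_def using assms(6,7,8) by (intro finite_cartesian_product finite_PiE) auto
  have fin: "finite ?Om"
    unfolding Om0_def using finsrc by (intro finite_cartesian_product finite_PiE) auto
  have al: "alph k ` ?Om \<subseteq> AX k"
    using k1 by (auto simp: Om0_def alph_def src_space_def PiE_iff)
  have Rnn: "0 \<le> R0 M J k p q u" if u: "u \<in> ?Om" for u
  proof -
    obtain x s v z where ud: "u = ((x, s, v), z)" by (metis prod.collapse)
    have xs: "(x, s, v) \<in> src_space M AX AS AV" and z: "z \<in> PiE ({J+1..M} - {k}) (\<lambda>\<kappa>. {0..<n \<kappa>})"
      using u ud by (auto simp: Om0_def)
    have qnn: "0 \<le> q \<kappa> (x \<kappa>) (z \<kappa>)" if \<kappa>: "\<kappa> \<in> {J+1..M} - {k}" for \<kappa>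
    proof -
      have "x \<kappa> \<in> AX \<kappa>" using xs \<kappa> by (auto simp: src_space_def PiE_iff)
      moreover have "z \<kappa> < n \<kappa>" using PiE_mem[OF z \<kappa>] by simp
      ultimately show ?thesis using assms(14) \<kappa> by (auto simp: is_channel_def)
    qed
    have "0 \<le> (\<Prod>\<kappa>\<in>{J+1..M} - {k}. q \<kappa> (x \<kappa>) (z \<kappa>))" by (rule prod_nonneg) (use qnn in blast)
    moreover have "0 \<le> p (x, s, v)" using assms(9) xs by blast
    ultimately show ?thesis using ud by (simp add: R0_def)
  qed
  have s1: "\<forall>u\<in>?Om. (\<Sum>b<N. qk (alph k u) b) = 1" if "is_channel (AX k) N qk" for N qk
    using that al by (auto simp: is_channel_def)
  let ?F = "Ftot M J L k AX AS AV p n q AR d a"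
  note FP = Ftot_props[where a=a and d=d, OF fin Rnn al assms(11)]
  obtain N0 q0 where q0: "is_channel (AX k) N0 q0" "N0 \<le> card (AX k)"
    "\<forall>N' q'. is_channel (AX k) N' q' \<longrightarrow> (\<Sum>z<N0. ?F (\<lambda>x. q0 x z)) \<le> (\<Sum>z<N'. ?F (\<lambda>x. q' x z))"
    using abstract_min[OF finX neX FP(1) FP(2) FP(3)] by blast
  show ?thesis
  proof (intro exI conjI allI impI)
    show "is_channel (AX k) N0 q0" "N0 \<le> card (AX k)" using q0 by auto
    fix N' qk' assume ch: "is_channel (AX k) N' qk'"
    show "objective M J L AX AS AV p AR d a (n(k := N0)) (q(k := q0))
        \<le> objective M J L AX AS AV p AR d a (n(k := N')) (q(k := qk'))"
      unfolding obj_decomp[OF kr fin s1[OF q0(1)] assms(11)] obj_decomp[OF kr fin s1[OF ch] assms(11)]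
      using q0(3) ch by auto
  qed
qed


end
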